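(* There exist constants $A_1,A_2$ depending only on $l$ such that for all $0<\eta<\xi$: $$\int_\eta^\xi V_1(z;\xi,\eta)\,z^{l-\frac12}\,dz\le A_1(\xi-\eta)^l\left(\sqrt\xi-\sqrt\eta\right)\qquad(l\ge-\tfrac12),$$ and $$\int_0^\eta V_2(z;\xi,\eta)\,z^{l-\frac12}\,dz\le\begin{cases}A_2(\xi-\eta)^l\left(\sqrt\xi-\sqrt\eta\right),& l>0,\\[2pt] A_2(\xi-\eta)^{l+\frac12}\left(1-\frac\eta\xi\right)^{l+\frac12},&-\tfrac12\le l<0.\end{cases}$$
   Context: Let ${}_2F_1$ denote the Gauss hypergeometric function (analytically continued to $(-\infty,0)$). For $0<\eta<z<\xi$ put $\sigma_1=\frac{(z-\xi)\eta}{(z-\eta)\xi}$ and $V_1(z;\xi,\eta)=\frac{(z-\eta)^l\xi^l}{z^{2l}}\left|{}_2F_1(-l,-l;1;\sigma_1)\right|$. For $0<z<\eta<\xi$ put $\sigma_2=-\frac{z(\xi-\eta)}{\xi(\eta-z)}$ and $V_2(z;\xi,\eta)=\frac{|\sin(\pi l)|\Gamma^2(1+l)}{\pi\Gamma(2+2l)}\frac{(\xi-\eta)^{1+2l}z}{\xi^{l+1}(\eta-z)^{l+1}}\left|{}_2F_1(1+l,1+l;2+2l;\sigma_2)\right|$. *)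

theory Defs
  imports "HOL-Analysis.Analysis"
begin

definition hyp2f1_series :: "real \<Rightarrow> real \<Rightarrow> real \<Rightarrow> real \<Rightarrow> real" where
  "hyp2f1_series a b c x =
     (\<Sum>n. pochhammer a n * pochhammer b n / (pochhammer c n * fact n) * x ^ n)"

text \<open>Gauss hypergeometric function: the series for |x| < 1, and its analytic
  continuation to the rest of (-inf, 1/2) given by the Pfaff transformation
  2F1(a,b;c;x) = (1-x)^(-a) 2F1(a,c-b;c;x/(x-1)), where |x/(x-1)| < 1.\<close>
definition hyp2f1 :: "real \<Rightarrow> real \<Rightarrow> real \<Rightarrow> real \<Rightarrow> real" where
  "hyp2f1 a b c x =
     (if \<bar>x\<bar> < 1 then hyp2f1_series a b c x
      else (1 - x) powr (- a) * hyp2f1_series a (c - b) c (x / (x - 1)))"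

definition V1 :: "real \<Rightarrow> real \<Rightarrow> real \<Rightarrow> real \<Rightarrow> real" where
  "V1 l z \<xi> \<eta> =
     (let \<sigma>1 = (z - \<xi>) * \<eta> / ((z - \<eta>) * \<xi>) in
      (z - \<eta>) powr l * \<xi> powr l / z powr (2 * l) * \<bar>hyp2f1 (- l) (- l) 1 \<sigma>1\<bar>)"

definition V2 :: "real \<Rightarrow> real \<Rightarrow> real \<Rightarrow> real \<Rightarrow> real" where
  "V2 l z \<xi> \<eta> =
     (let \<sigma>2 = - (z * (\<xi> - \<eta>)) / (\<xi> * (\<eta> - z)) in
      \<bar>sin (pi * l)\<bar> * (Gamma (1 + l))\<^sup>2 / (pi * Gamma (2 + 2 * l))
      * ((\<xi> - \<eta>) powr (1 + 2 * l) * z / (\<xi> powr (l + 1) * (\<eta> - z) powr (l + 1)))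
      * \<bar>hyp2f1 (1 + l) (1 + l) (2 + 2 * l) \<sigma>2\<bar>)"

end

theory Submission
  imports Defs
begin

lemma pint_left:
  fixes a u v :: real
  assumes a: "a > -1" and uv: "u < v"
  shows "set_integrable lborel {u<..<v} (\<lambda>z. (z - u) powr a)"
    "(LBINT z:{u<..<v}. (z - u) powr a) = (v - u) powr (a + 1) / (a + 1)"
proof -
  let ?F = "\<lambda>z. (z - u) powr (a + 1) / (a + 1)"
  have D: "DERIV ?F x :> (x - u) powr a" if "ereal u < ereal x" "ereal x < ereal v" for x
  proof -
    have x: "x > u" using that by simp
    have "DERIV (\<lambda>z. (z - u) powr (a + 1)) x :> (a + 1) * (x - u) powr (a + 1 - 1)"
      by (rule derivative_eq_intros refl | use x in simp)+
    then have "DERIV ?F x :> (a + 1) * (x - u) powr (a + 1 - 1) / (a + 1)"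
      by (intro DERIV_minus DERIV_cdivide)
    thus ?thesis using a by simp
  qed
  have C: "isCont (\<lambda>z. (z - u) powr a) x" if "ereal u < ereal x" "ereal x < ereal v" for x
    using that by (intro continuous_intros) auto
  have A: "((?F \<circ> real_of_ereal) \<longlongrightarrow> 0) (at_right (ereal u))"
    unfolding ereal_tendsto_simps1
  proof -
    have "((\<lambda>z. (z - u) powr (a + 1)) \<longlongrightarrow> 0) (at_right u)"
    proof (rule tendsto_zero_powrI[where b="a+1"])
      show "((\<lambda>z. z - u) \<longlongrightarrow> 0) (at_right u)"
        by (rule tendsto_eq_intros refl | simp)+
      show "\<forall>\<^sub>F z in at_right u. 0 \<le> z - u"
        by (rule eventually_at_rightI[of u v]) (use uv in auto)
    qed (use a in auto)
    thus "(?F \<longlongrightarrow> 0) (at_right u)" using tendsto_divide_zero by blast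
  qed
  have B: "((?F \<circ> real_of_ereal) \<longlongrightarrow> ?F v) (at_left (ereal v))"
    unfolding ereal_tendsto_simps1
    using uv a by (intro tendsto_intros) auto
  note R = interval_integral_FTC_nonneg[of "ereal u" "ereal v" ?F "\<lambda>z. (z - u) powr a", OF _ D C _ A B]
  show "set_integrable lborel {u<..<v} (\<lambda>z. (z - u) powr a)"
    using R(1) uv by simp
  show "(LBINT z:{u<..<v}. (z - u) powr a) = (v - u) powr (a + 1) / (a + 1)"
    using R(2) uv by (simp add: interval_integral_Ioo)
qed

lemma pint_right:
  fixes a u v :: real
  assumes a: "a > -1" and uv: "u < v"
  shows "set_integrable lborel {u<..<v} (\<lambda>z. (v - z) powr a)"
    "(LBINT z:{u<..<v}. (v - z) powr a) = (v - u) powr (a + 1) / (a + 1)"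
proof -
  let ?F = "\<lambda>z. - ((v - z) powr (a + 1) / (a + 1))"
  have D: "DERIV ?F x :> (v - x) powr a" if "ereal u < ereal x" "ereal x < ereal v" for x
  proof -
    have x: "x < v" using that by simp
    have "DERIV (\<lambda>z. (v - z) powr (a + 1)) x :> (a + 1) * (v - x) powr (a + 1 - 1) * (0 - 1)"
      by (rule derivative_eq_intros refl | use x in simp)+
    then have "DERIV ?F x :> - ((a + 1) * (v - x) powr (a + 1 - 1) * (0 - 1) / (a + 1))"
      by (intro DERIV_minus DERIV_cdivide)
    thus ?thesis using a by simp
  qed
  have C: "isCont (\<lambda>z. (v - z) powr a) x" if "ereal u < ereal x" "ereal x < ereal v" for x
    using that by (intro continuous_intros) auto
  have B: "((?F \<circ> real_of_ereal) \<longlongrightarrow> 0) (at_left (ereal v))"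
    unfolding ereal_tendsto_simps1
  proof -
    have "((\<lambda>z. (v - z) powr (a + 1)) \<longlongrightarrow> 0) (at_left v)"
    proof (rule tendsto_zero_powrI[where b="a+1"])
      show "((\<lambda>z. v - z) \<longlongrightarrow> 0) (at_left v)"
        by (rule tendsto_eq_intros refl | simp)+
      show "\<forall>\<^sub>F z in at_left v. 0 \<le> v - z"
        by (rule eventually_at_leftI[of u v]) (use uv in auto)
    qed (use a in auto)
    thus "(?F \<longlongrightarrow> 0) (at_left v)" using tendsto_divide_zero tendsto_minus by fastforce
  qed
  have A: "((?F \<circ> real_of_ereal) \<longlongrightarrow> ?F u) (at_right (ereal u))"
    unfolding ereal_tendsto_simps1
    using uv a by (intro tendsto_intros) auto
  note R = interval_integral_FTC_nonneg[of "ereal u" "ereal v" ?F "\<lambda>z. (v - z) powr a", OF _ D C _ A B]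
  show "set_integrable lborel {u<..<v} (\<lambda>z. (v - z) powr a)"
    using R(1) uv by simp
  show "(LBINT z:{u<..<v}. (v - z) powr a) = (v - u) powr (a + 1) / (a + 1)"
    using R(2) uv by (simp add: interval_integral_Ioo)
qed

lemma alt_bound:
  fixes c :: "nat \<Rightarrow> real"
  assumes mono: "\<And>n. n \<ge> N \<Longrightarrow> 0 \<le> c n \<and> c (Suc n) \<le> c n"
  assumes x: "-1 < x" "x \<le> 0"
  shows "summable (\<lambda>n. c n * x ^ n) \<and> \<bar>\<Sum>n. c n * x ^ n\<bar> \<le> (\<Sum>i<N. \<bar>c i\<bar>) + c N"
proof -
  define t where "t = - x"
  have t: "0 \<le> t" "t < 1" using x by (auto simp: t_def)
  define a where "a k = c (k + N) * t ^ k" for k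
  have a_nn: "0 \<le> a k" for k using mono[of "k+N"] t by (auto simp: a_def)
  have a_mono: "a (Suc k) \<le> a k" for k
  proof -
    have "c (Suc (k + N)) * t ^ Suc k \<le> c (k + N) * t ^ Suc k"
      using mono[of "k+N"] t by (intro mult_right_mono) auto
    also have "\<dots> \<le> c (k + N) * t ^ k"
      using mono[of "k+N"] t by (intro mult_left_mono) (auto simp: mult_left_le_one_le)
    finally show ?thesis by (simp add: a_def)
  qed
  have a_le: "a k \<le> c N * t ^ k" for k
  proof (induction k)
    case 0 then show ?case by (simp add: a_def)
  next
    case (Suc k)
    have "a (Suc k) \<le> c (k + N) * t ^ Suc k"
      using mono[of "k+N"] t by (auto simp: a_def intro!: mult_right_mono)
    also have "\<dots> = a k * t" by (simp add: a_def)
    also have "\<dots> \<le> c N * t ^ k * t" using Suc t by (intro mult_right_mono) auto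
    finally show ?case by (simp add: mult_ac)
  qed
  have a0: "a \<longlonglongrightarrow> 0"
  proof (rule tendsto_sandwich[of "\<lambda>_. 0" _ _ "\<lambda>k. c N * t ^ k"])
    show "\<forall>\<^sub>F n in sequentially. 0 \<le> a n" using a_nn by simp
    show "\<forall>\<^sub>F n in sequentially. a n \<le> c N * t ^ n" using a_le by simp
    have "(\<lambda>k. c N * t ^ k) \<longlonglongrightarrow> c N * 0"
      by (intro tendsto_mult tendsto_const LIMSEQ_power_zero) (use t in auto)
    thus "(\<lambda>k. c N * t ^ k) \<longlonglongrightarrow> 0" by simp
  qed simp
  note L = summable_Leibniz'[OF a0 a_nn a_mono]
  have shift: "c (k + N) * x ^ (k + N) = x ^ N * ((-1) ^ k * a k)" for k
    by (simp add: a_def t_def power_add power_minus[symmetric] algebra_simps)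
  have sumsh: "summable (\<lambda>k. c (k + N) * x ^ (k + N))"
    unfolding shift by (intro summable_mult L(1))
  then have summ: "summable (\<lambda>n. c n * x ^ n)"
    using summable_iff_shift[of "\<lambda>n. c n * x ^ n" N] by simp
  have up: "(\<Sum>i. (-1)^i * a i) \<le> a 0"
    using L(4)[of 0] by simp
  have lo: "0 \<le> (\<Sum>i. (-1)^i * a i)"
    using L(2)[of 0] by simp
  have tail: "\<bar>\<Sum>k. c (k + N) * x ^ (k + N)\<bar> \<le> c N"
  proof -
    have "(\<Sum>k. c (k + N) * x ^ (k + N)) = x ^ N * (\<Sum>k. (-1) ^ k * a k)"
      unfolding shift by (rule suminf_mult[OF L(1)])
    also have "\<bar>\<dots>\<bar> \<le> 1 * a 0"
    proof -
      have h: "\<bar>x ^ N\<bar> \<le> 1" unfolding power_abs by (rule power_le_one) (use x in auto)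
      show ?thesis
        unfolding abs_mult using up lo h by (intro mult_mono) auto
    qed
    finally show ?thesis by (simp add: a_def)
  qed
  have head: "\<bar>\<Sum>i<N. c i * x ^ i\<bar> \<le> (\<Sum>i<N. \<bar>c i\<bar>)"
  proof -
    have "\<bar>\<Sum>i<N. c i * x ^ i\<bar> \<le> (\<Sum>i<N. \<bar>c i * x ^ i\<bar>)" by (rule sum_abs)
    also have "\<dots> \<le> (\<Sum>i<N. \<bar>c i\<bar>)"
    proof (intro sum_mono)
      fix i
      have h: "\<bar>x ^ i\<bar> \<le> 1" unfolding power_abs by (rule power_le_one) (use x in auto)
      show "\<bar>c i * x ^ i\<bar> \<le> \<bar>c i\<bar>" unfolding abs_mult
        using h by (intro mult_left_le) auto
    qed
    finally show ?thesis .
  qed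
  have "(\<Sum>n. c n * x ^ n) = (\<Sum>k. c (k + N) * x ^ (k + N)) + (\<Sum>i<N. c i * x ^ i)"
    by (rule suminf_split_initial_segment[OF summ])
  then show ?thesis using summ head tail by auto
qed

lemma ratio_bound:
  fixes c b :: "nat \<Rightarrow> real"
  assumes bpos: "\<And>n. b n > 0"
  assumes r: "\<And>n. n \<ge> N \<Longrightarrow> \<bar>c (Suc n)\<bar> * b n \<le> \<bar>c n\<bar> * b (Suc n)"
  shows "\<exists>E\<ge>0. \<forall>n. \<bar>c n\<bar> \<le> E * b n"
proof -
  define E where "E = (\<Sum>i\<le>N. \<bar>c i\<bar> / b i)"
  have E0: "E \<ge> 0" unfolding E_def by (intro sum_nonneg divide_nonneg_pos) (auto simp: bpos)
  have small: "\<bar>c n\<bar> / b n \<le> E" if "n \<le> N" for n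
    unfolding E_def
  proof (rule member_le_sum)
    fix x assume "x \<in> {..N} - {n}"
    show "0 \<le> \<bar>c x\<bar> / b x" by (rule divide_nonneg_pos) (auto simp: bpos)
  qed (use that in auto)
  have "\<bar>c n\<bar> \<le> E * b n" for n
  proof (cases "n \<le> N")
    case True then show ?thesis using small[OF True] bpos[of n] by (simp add: field_simps)
  next
    case False
    then obtain k where k: "n = N + k" by (metis le_add_diff_inverse nat_le_linear)
    have "\<bar>c (N + k)\<bar> \<le> E * b (N + k)"
    proof (induction k)
      case 0 then show ?case using small[of N] bpos[of N] by (simp add: field_simps)
    next
      case (Suc k)
      have "\<bar>c (Suc (N + k))\<bar> * b (N + k) \<le> \<bar>c (N + k)\<bar> * b (Suc (N + k))" by (rule r) simp
      also have "\<dots> \<le> E * b (N + k) * b (Suc (N + k))"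
        using Suc bpos[of "Suc (N+k)"] by (intro mult_right_mono) auto
      finally have "\<bar>c (Suc (N + k))\<bar> * b (N + k) \<le> (E * b (Suc (N + k))) * b (N + k)"
        by (simp add: algebra_simps)
      then show ?case using bpos[of "N+k"] by simp
    qed
    then show ?thesis using k by simp
  qed
  then show ?thesis using E0 by blast
qed

lemma binom_sums:
  fixes d y :: real
  assumes "0 \<le> y" "y < 1"
  shows "(\<lambda>n. pochhammer d n / fact n * y ^ n) sums (1 - y) powr (- d)"
proof -
  have "(\<lambda>n. ((- d) gchoose n) * (- y) ^ n) sums (1 + - y) powr (- d)"
    by (rule gen_binomial_real) (use assms in auto)
  moreover have "((- d) gchoose n) * (- y) ^ n = pochhammer d n / fact n * y ^ n" for n
    by (simp add: gbinomial_pochhammer power_minus[of y] field_simps)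
  ultimately show ?thesis by simp
qed

lemma pos_bound:
  fixes c :: "nat \<Rightarrow> real" and d :: real
  assumes d: "0 < d"
  assumes r: "\<And>n. n \<ge> N \<Longrightarrow> \<bar>c (Suc n)\<bar> * (real n + 1) \<le> \<bar>c n\<bar> * (real n + d)"
  shows "\<exists>E\<ge>0. \<forall>y. 0 \<le> y \<and> y < 1 \<longrightarrow> summable (\<lambda>n. c n * y ^ n) \<and>
            \<bar>\<Sum>n. c n * y ^ n\<bar> \<le> E * (1 - y) powr (- d)"
proof -
  define b where "b n = pochhammer d n / fact n" for n
  have bpos: "b n > 0" for n using d by (auto simp: b_def pochhammer_pos)
  have bS: "b (Suc n) = b n * (d + real n) / (real n + 1)" for n
    by (simp add: b_def pochhammer_Suc field_simps)
  have "\<bar>c (Suc n)\<bar> * b n \<le> \<bar>c n\<bar> * b (Suc n)" if "n \<ge> N" for n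
  proof -
    have "\<bar>c (Suc n)\<bar> * b n = (\<bar>c (Suc n)\<bar> * (real n + 1)) * (b n / (real n + 1))"
      by (simp add: field_simps)
    also have "\<dots> \<le> (\<bar>c n\<bar> * (real n + d)) * (b n / (real n + 1))"
      using r[OF that] bpos[of n] by (intro mult_right_mono) auto
    also have "\<dots> = \<bar>c n\<bar> * b (Suc n)" by (simp add: bS field_simps)
    finally show ?thesis .
  qed
  from ratio_bound[of b N c, OF bpos this] obtain E where E: "E \<ge> 0" "\<And>n. \<bar>c n\<bar> \<le> E * b n" by blast
  have "summable (\<lambda>n. c n * y ^ n) \<and> \<bar>\<Sum>n. c n * y ^ n\<bar> \<le> E * (1 - y) powr (- d)"
    if y: "0 \<le> y" "y < 1" for y
  proof -
    have bs: "(\<lambda>n. b n * y ^ n) sums (1 - y) powr (- d)"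
      using binom_sums[OF y, of d] by (simp add: b_def)
    have Ebs: "(\<lambda>n. E * (b n * y ^ n)) sums (E * (1 - y) powr (- d))"
      by (rule sums_mult[OF bs])
    have le: "norm (c n * y ^ n) \<le> E * (b n * y ^ n)" for n
      using mult_right_mono[OF E(2)[of n], of "y^n"] y by (auto simp: abs_mult mult.assoc)
    have sa: "summable (\<lambda>n. norm (c n * y ^ n))"
      by (rule summable_comparison_test'[where N=0, OF sums_summable[OF Ebs]]) (subst real_norm_def, subst abs_norm_cancel, rule le)
    have s: "summable (\<lambda>n. c n * y ^ n)" by (rule summable_norm_cancel[OF sa])
    have "norm (\<Sum>n. c n * y ^ n) \<le> (\<Sum>n. norm (c n * y ^ n))"
      by (rule summable_norm[OF sa])
    also have "\<dots> \<le> (\<Sum>n. E * (b n * y ^ n))"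
      by (rule suminf_le[OF le sa sums_summable[OF Ebs]])
    also have "\<dots> = E * (1 - y) powr (- d)" by (rule sums_unique[OF Ebs, symmetric])
    finally have "norm (\<Sum>n. c n * y ^ n) \<le> E * (1 - y) powr (- d)" .
    then show ?thesis using s by (simp only: real_norm_def simp_thms)
  qed
  then show ?thesis using E(1) by (intro exI[of _ E]) simp
qed

definition hc :: "real \<Rightarrow> real \<Rightarrow> real \<Rightarrow> nat \<Rightarrow> real" where
  "hc a b c n = pochhammer a n * pochhammer b n / (pochhammer c n * fact n)"

lemma hyp2f1_series_hc: "hyp2f1_series a b c x = (\<Sum>n. hc a b c n * x ^ n)"
  by (simp add: hyp2f1_series_def hc_def)

lemma hc_Suc:
  assumes "c > 0"
  shows "hc a b c (Suc n) = hc a b c n * ((a + real n) * (b + real n) / ((c + real n) * (real n + 1)))"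
proof -
  have "pochhammer c n > 0" using assms by (rule pochhammer_pos)
  moreover have "c + real n > 0" using assms by simp
  ultimately show ?thesis
    by (simp add: hc_def pochhammer_Suc fact_Suc field_simps)
qed

lemma pw_low:
  fixes t e :: real
  assumes "1 \<le> t" "t \<le> 2"
  shows "2 powr (- \<bar>e\<bar>) \<le> t powr e"
proof (cases "e \<ge> 0")
  case True
  have "1 \<le> 2 powr \<bar>e\<bar>" by (rule ge_one_powr_ge_zero) auto
  then have "2 powr (- \<bar>e\<bar>) \<le> 1" by (simp add: powr_minus_divide)
  also have "1 \<le> t powr e" using assms True by (intro ge_one_powr_ge_zero) auto
  finally show ?thesis .
next
  case False
  then have "2 powr (- \<bar>e\<bar>) = 2 powr e" by simp
  also have "\<dots> \<le> t powr e" using False assms by (intro powr_mono2') auto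
  finally show ?thesis .
qed

lemma hb1:
  fixes l :: real
  assumes l: "l \<ge> -1/2"
  shows "\<exists>K\<ge>0. \<forall>x\<le>0. \<bar>hyp2f1 (- l) (- l) 1 x\<bar> \<le> K * (1 - x) powr (l + 1/4)"
proof -
  define N where "N = nat \<lceil>l\<rceil>"
  have Nl: "real n \<ge> l" if "n \<ge> N" for n
    using that unfolding N_def by linarith
  have m1: "0 \<le> hc (- l) (- l) 1 n \<and> hc (- l) (- l) 1 (Suc n) \<le> hc (- l) (- l) 1 n"
    if "n \<ge> N" for n
  proof -
    have nn: "0 \<le> hc (- l) (- l) 1 m" for m
      by (simp add: hc_def pochhammer_fact[symmetric])
    have r: "(- l + real n) * (- l + real n) / ((1 + real n) * (real n + 1)) \<le> 1"
    proof -
      have "0 \<le> - l + real n" "- l + real n \<le> real n + 1" using Nl[OF that] l by auto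
      then have "(- l + real n) * (- l + real n) \<le> (1 + real n) * (real n + 1)"
        by (intro mult_mono) auto
      then show ?thesis by (simp add: divide_le_eq_1)
    qed
    have "hc (- l) (- l) 1 (Suc n) = hc (- l) (- l) 1 n *
            ((- l + real n) * (- l + real n) / ((1 + real n) * (real n + 1)))"
      by (rule hc_Suc) simp
    also have "\<dots> \<le> hc (- l) (- l) 1 n * 1"
      using nn[of n] r by (intro mult_left_mono) auto
    finally show ?thesis using nn[of n] by simp
  qed
  define K0 where "K0 = (\<Sum>i<N. \<bar>hc (- l) (- l) 1 i\<bar>) + hc (- l) (- l) 1 N"
  have small: "\<bar>hyp2f1_series (- l) (- l) 1 x\<bar> \<le> K0" if "-1 < x" "x \<le> 0" for x
    using alt_bound[of N "hc (- l) (- l) 1" x, OF m1 that] unfolding hyp2f1_series_hc K0_def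
    by blast
  have K0: "K0 \<ge> 0" using small[of 0] by simp
  have r2: "\<bar>hc (- l) (1 + l) 1 (Suc n)\<bar> * (real n + 1) \<le> \<bar>hc (- l) (1 + l) 1 n\<bar> * (real n + 1/4)"
    if "n \<ge> N" for n
  proof -
    have q: "\<bar>(- l + real n) * (1 + l + real n)\<bar> \<le> (1 + real n) * (real n + 1/4)"
    proof -
      have a: "0 \<le> - l + real n" using Nl[OF that] by auto
      have b: "0 \<le> 1 + l + real n" using l by auto
      have "(- l + real n) * (1 + l + real n) = real n * real n + real n - l - l * l"
        by (simp add: algebra_simps)
      also have "\<dots> \<le> (1 + real n) * (real n + 1/4)"
      proof -
        have "0 \<le> (l + 1/2) * (l + 1/2)" by simp
        then have "- l - l * l \<le> 1/4" by (simp add: algebra_simps)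
        moreover have "(1 + real n) * (real n + 1/4) = real n * real n + 5/4 * real n + 1/4"
          by (simp add: field_simps)
        ultimately show ?thesis by simp
      qed
      finally show ?thesis using a b by simp
    qed
    define P where "P = (- l + real n) * (1 + l + real n)"
    define D where "D = 1 + real n"
    have D: "D > 0" by (simp add: D_def)
    have eq: "hc (- l) (1 + l) 1 (Suc n) = hc (- l) (1 + l) 1 n * (P / (D * D))"
      unfolding P_def D_def by (subst hc_Suc) (simp_all add: add.commute)
    have "\<bar>hc (- l) (1 + l) 1 (Suc n)\<bar> * (real n + 1) = \<bar>hc (- l) (1 + l) 1 n\<bar> * (\<bar>P\<bar> / (D * D)) * D"
      unfolding eq abs_mult abs_divide using D by (simp add: D_def add.commute)
    also have "\<dots> = \<bar>hc (- l) (1 + l) 1 n\<bar> * (\<bar>P\<bar> / D)"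
      using D by (simp add: field_simps)
    finally have "\<bar>hc (- l) (1 + l) 1 (Suc n)\<bar> * (real n + 1) =
          \<bar>hc (- l) (1 + l) 1 n\<bar> * (\<bar>(- l + real n) * (1 + l + real n)\<bar> / (1 + real n))"
      by (simp add: P_def D_def)
    also have "\<dots> \<le> \<bar>hc (- l) (1 + l) 1 n\<bar> * (real n + 1/4)"
      using q by (intro mult_left_mono) (auto simp: divide_le_eq mult.commute)
    finally show ?thesis .
  qed
  have "(0::real) < 1/4" by simp
  from pos_bound[of "1/4" N "hc (- l) (1 + l) 1", OF this r2]
  obtain E where E0: "E \<ge> 0" and EE: "\<forall>y. 0 \<le> y \<and> y < 1 \<longrightarrow> summable (\<lambda>n. hc (- l) (1 + l) 1 n * y ^ n) \<and>
      \<bar>\<Sum>n. hc (- l) (1 + l) 1 n * y ^ n\<bar> \<le> E * (1 - y) powr (- (1/4))"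
    by blast
  have E: "E \<ge> 0" "\<And>y. 0 \<le> y \<Longrightarrow> y < 1 \<Longrightarrow>
      \<bar>\<Sum>n. hc (- l) (1 + l) 1 n * y ^ n\<bar> \<le> E * (1 - y) powr (- (1/4))"
    using E0 EE by blast+
  define K where "K = K0 * 2 powr \<bar>l + 1/4\<bar> + E"
  have "\<bar>hyp2f1 (- l) (- l) 1 x\<bar> \<le> K * (1 - x) powr (l + 1/4)" if x: "x \<le> 0" for x
  proof (cases "\<bar>x\<bar> < 1")
    case True
    have "\<bar>hyp2f1 (- l) (- l) 1 x\<bar> \<le> K0" using True small[of x] x by (simp add: hyp2f1_def)
    also have "\<dots> = K0 * 2 powr \<bar>l + 1/4\<bar> * 2 powr (- \<bar>l + 1/4\<bar>)"
      by (simp add: powr_minus field_simps)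
    also have "\<dots> \<le> K0 * 2 powr \<bar>l + 1/4\<bar> * (1 - x) powr (l + 1/4)"
      using True x K0 by (intro mult_left_mono pw_low) auto
    also have "\<dots> \<le> K * (1 - x) powr (l + 1/4)"
      unfolding K_def using E(1) by (intro mult_right_mono) auto
    finally show ?thesis .
  next
    case False
    then have x1: "x \<le> -1" using x by auto
    define y where "y = x / (x - 1)"
    have y: "0 \<le> y" "y < 1" using x1 by (auto simp: y_def field_simps)
    have y1: "1 - y = inverse (1 - x)" using x1 by (simp add: y_def field_simps)
    have "hyp2f1 (- l) (- l) 1 x = (1 - x) powr l * (\<Sum>n. hc (- l) (1 + l) 1 n * y ^ n)"
      using False by (simp add: hyp2f1_def hyp2f1_series_hc y_def)
    then have "\<bar>hyp2f1 (- l) (- l) 1 x\<bar> = (1 - x) powr l * \<bar>\<Sum>n. hc (- l) (1 + l) 1 n * y ^ n\<bar>"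
      by (simp add: abs_mult)
    also have "\<dots> \<le> (1 - x) powr l * (E * (1 - y) powr (- (1/4)))"
      using E(2)[OF y] by (intro mult_left_mono) auto
    also have "(1 - y) powr (- (1/4)) = (1 - x) powr (1/4)"
      unfolding y1 inverse_powr powr_minus by simp
    also have "(1 - x) powr l * (E * (1 - x) powr (1/4)) = E * (1 - x) powr (l + 1/4)"
      using x1 by (simp add: powr_add)
    also have "\<dots> \<le> K * (1 - x) powr (l + 1/4)"
      unfolding K_def using K0 by (intro mult_right_mono) auto
    finally show ?thesis .
  qed
  moreover have "K \<ge> 0" unfolding K_def using K0 E by auto
  ultimately show ?thesis by blast
qed

lemma hb2:
  fixes l :: real
  assumes l: "l \<ge> -1/2"
  shows "\<exists>K\<ge>0. \<forall>x\<le>0. \<bar>hyp2f1 (1 + l) (1 + l) (2 + 2 * l) x\<bar> \<le> K * (1 - x) powr (- l - 3/4)"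
proof -
  have cpos: "2 + 2 * l > 0" using l by simp
  define N where "N = nat \<lceil>l * l\<rceil>"
  have Nl: "real n \<ge> l * l" if "n \<ge> N" for n
    using that unfolding N_def by linarith
  have nn: "0 \<le> hc (1 + l) (1 + l) (2 + 2 * l) m" for m
  proof -
    have "pochhammer (2 + 2 * l) m > 0" using cpos by (rule pochhammer_pos)
    then show ?thesis unfolding hc_def by (intro divide_nonneg_pos) auto
  qed
  have m1: "0 \<le> hc (1 + l) (1 + l) (2 + 2 * l) n \<and>
      hc (1 + l) (1 + l) (2 + 2 * l) (Suc n) \<le> hc (1 + l) (1 + l) (2 + 2 * l) n"
    if "n \<ge> N" for n
  proof -
    have r: "(1 + l + real n) * (1 + l + real n) / ((2 + 2 * l + real n) * (real n + 1)) \<le> 1"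
    proof -
      have "(2 + 2 * l + real n) * (real n + 1) - (1 + l + real n) * (1 + l + real n) = real n + 1 - l * l"
        by (simp add: algebra_simps)
      then have "(1 + l + real n) * (1 + l + real n) \<le> (2 + 2 * l + real n) * (real n + 1)"
        using Nl[OF that] by linarith
      moreover have "(2 + 2 * l + real n) * (real n + 1) > 0" using cpos by simp
      ultimately show ?thesis by (simp add: divide_le_eq_1)
    qed
    have "hc (1 + l) (1 + l) (2 + 2 * l) (Suc n) = hc (1 + l) (1 + l) (2 + 2 * l) n *
            ((1 + l + real n) * (1 + l + real n) / ((2 + 2 * l + real n) * (real n + 1)))"
      by (rule hc_Suc[OF cpos])
    also have "\<dots> \<le> hc (1 + l) (1 + l) (2 + 2 * l) n * 1"
      using nn[of n] r by (intro mult_left_mono) auto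
    finally show ?thesis using nn[of n] by simp
  qed
  define K0 where "K0 = (\<Sum>i<N. \<bar>hc (1 + l) (1 + l) (2 + 2 * l) i\<bar>) + hc (1 + l) (1 + l) (2 + 2 * l) N"
  have small: "\<bar>hyp2f1_series (1 + l) (1 + l) (2 + 2 * l) x\<bar> \<le> K0" if "-1 < x" "x \<le> 0" for x
    using alt_bound[of N "hc (1 + l) (1 + l) (2 + 2 * l)" x, OF m1 that] unfolding hyp2f1_series_hc K0_def
    by blast
  have K0: "K0 \<ge> 0" using small[of 0] by simp
  define M where "M = nat \<lceil>4 * ((1 + l) * (1 + l))\<rceil>"
  have Ml: "real n \<ge> 4 * ((1 + l) * (1 + l))" if "n \<ge> M" for n
    using that unfolding M_def by linarith
  have r2: "\<bar>hc (1 + l) (1 + l) (2 + 2 * l) (Suc n)\<bar> * (real n + 1) \<le>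
      \<bar>hc (1 + l) (1 + l) (2 + 2 * l) n\<bar> * (real n + 1/4)"
    if "n \<ge> M" for n
  proof -
    define P where "P = (1 + l + real n) * (1 + l + real n)"
    define D where "D = 2 + 2 * l + real n"
    have D: "D > 0" using cpos by (simp add: D_def)
    have q: "P \<le> D * (real n + 1/4)"
    proof -
      define Q where "Q = (1 + l) * (1 + l)"
      have "4 * (D * (real n + 1/4) - P) = real n + 2 + 2 * l - 4 * Q"
        unfolding D_def P_def Q_def by (simp add: field_simps)
      moreover have "real n \<ge> 4 * Q" using Ml[OF that] by (simp add: Q_def)
      then have "0 \<le> real n + 2 + 2 * l - 4 * Q" using l by linarith
      ultimately have "0 \<le> 4 * (D * (real n + 1/4) - P)" by simp
      then show ?thesis by simp
    qed
    have eq: "hc (1 + l) (1 + l) (2 + 2 * l) (Suc n) = hc (1 + l) (1 + l) (2 + 2 * l) n * (P / (D * (real n + 1)))"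
      unfolding P_def D_def by (rule hc_Suc[OF cpos])
    have P0: "P \<ge> 0" unfolding P_def by simp
    have "\<bar>hc (1 + l) (1 + l) (2 + 2 * l) (Suc n)\<bar> * (real n + 1) =
        \<bar>hc (1 + l) (1 + l) (2 + 2 * l) n\<bar> * (P / (D * (real n + 1))) * (real n + 1)"
      unfolding eq abs_mult using D P0 by simp
    also have "\<dots> = \<bar>hc (1 + l) (1 + l) (2 + 2 * l) n\<bar> * (P / D)"
    proof -
      have n1: "real n + 1 \<noteq> 0" by simp
      show ?thesis using D n1 by (simp add: divide_simps)
    qed
    also have "\<dots> \<le> \<bar>hc (1 + l) (1 + l) (2 + 2 * l) n\<bar> * (real n + 1/4)"
      using q D by (intro mult_left_mono) (auto simp: divide_le_eq mult.commute)
    finally show ?thesis .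
  qed
  have "(0::real) < 1/4" by simp
  from pos_bound[of "1/4" M "hc (1 + l) (1 + l) (2 + 2 * l)", OF this r2]
  obtain E where E0: "E \<ge> 0" and EE: "\<forall>y. 0 \<le> y \<and> y < 1 \<longrightarrow> summable (\<lambda>n. hc (1 + l) (1 + l) (2 + 2 * l) n * y ^ n) \<and>
      \<bar>\<Sum>n. hc (1 + l) (1 + l) (2 + 2 * l) n * y ^ n\<bar> \<le> E * (1 - y) powr (- (1/4))"
    by blast
  have E: "\<And>y. 0 \<le> y \<Longrightarrow> y < 1 \<Longrightarrow>
      \<bar>\<Sum>n. hc (1 + l) (1 + l) (2 + 2 * l) n * y ^ n\<bar> \<le> E * (1 - y) powr (- (1/4))"
    using EE by blast
  define K where "K = K0 * 2 powr \<bar>- l - 3/4\<bar> + E"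
  have "\<bar>hyp2f1 (1 + l) (1 + l) (2 + 2 * l) x\<bar> \<le> K * (1 - x) powr (- l - 3/4)" if x: "x \<le> 0" for x
  proof (cases "\<bar>x\<bar> < 1")
    case True
    have "\<bar>hyp2f1 (1 + l) (1 + l) (2 + 2 * l) x\<bar> \<le> K0" using True small[of x] x by (simp add: hyp2f1_def)
    also have "\<dots> = K0 * 2 powr \<bar>- l - 3/4\<bar> * 2 powr (- \<bar>- l - 3/4\<bar>)"
      by (simp add: powr_minus field_simps)
    also have "\<dots> \<le> K0 * 2 powr \<bar>- l - 3/4\<bar> * (1 - x) powr (- l - 3/4)"
      using True x K0 by (intro mult_left_mono pw_low) auto
    also have "\<dots> \<le> K * (1 - x) powr (- l - 3/4)"
      unfolding K_def using E0 by (intro mult_right_mono) auto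
    finally show ?thesis .
  next
    case False
    then have x1: "x \<le> -1" using x by auto
    define y where "y = x / (x - 1)"
    have y: "0 \<le> y" "y < 1" using x1 by (auto simp: y_def field_simps)
    have y1: "1 - y = inverse (1 - x)" using x1 by (simp add: y_def field_simps)
    have cb: "2 + 2 * l - (1 + l) = 1 + l" by simp
    have "hyp2f1 (1 + l) (1 + l) (2 + 2 * l) x =
        (1 - x) powr (- (1 + l)) * (\<Sum>n. hc (1 + l) (1 + l) (2 + 2 * l) n * y ^ n)"
      using False unfolding hyp2f1_def cb by (simp add: hyp2f1_series_hc y_def)
    then have "\<bar>hyp2f1 (1 + l) (1 + l) (2 + 2 * l) x\<bar> =
        (1 - x) powr (- (1 + l)) * \<bar>\<Sum>n. hc (1 + l) (1 + l) (2 + 2 * l) n * y ^ n\<bar>"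
      by (simp add: abs_mult)
    also have "\<dots> \<le> (1 - x) powr (- (1 + l)) * (E * (1 - y) powr (- (1/4)))"
      using E[OF y] by (intro mult_left_mono) auto
    also have "(1 - y) powr (- (1/4)) = (1 - x) powr (1/4)"
      unfolding y1 inverse_powr powr_minus by simp
    also have "(1 - x) powr (- (1 + l)) * (E * (1 - x) powr (1/4)) = E * (1 - x) powr (- (1 + l) + 1/4)"
      using powr_add[of "1 - x" "- (1 + l)" "1/4"] by (simp only: mult_ac)
    also have "- (1 + l) + 1/4 = - l - 3/4" by simp
    also have "E * (1 - x) powr (- l - 3/4) \<le> K * (1 - x) powr (- l - 3/4)"
      unfolding K_def using K0 by (intro mult_right_mono) auto
    finally show ?thesis .
  qed
  moreover have "K \<ge> 0" unfolding K_def using K0 E0 by auto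
  ultimately show ?thesis by blast
qed

lemma hyp2f1_series_meas [measurable]: "hyp2f1_series a b c \<in> borel_measurable borel"
  unfolding hyp2f1_series_def[abs_def] suminf_eq_lim by measurable

lemma hyp2f1_meas [measurable]: "hyp2f1 a b c \<in> borel_measurable borel"
  unfolding hyp2f1_def[abs_def] by measurable

lemma V1_meas: "(\<lambda>z. V1 l z \<xi> \<eta> * z powr (l - 1 / 2)) \<in> borel_measurable lborel"
  unfolding V1_def Let_def by measurable

lemma V2_meas: "(\<lambda>z. V2 l z \<xi> \<eta> * z powr (l - 1 / 2)) \<in> borel_measurable lborel"
  unfolding V2_def Let_def by measurable

lemma V1_pt:
  fixes l K \<xi> \<eta> z :: real
  assumes K: "\<And>x. x \<le> 0 \<Longrightarrow> \<bar>hyp2f1 (- l) (- l) 1 x\<bar> \<le> K * (1 - x) powr (l + 1/4)"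
  assumes z: "0 < \<eta>" "\<eta> < z" "z < \<xi>"
  shows "\<bar>V1 l z \<xi> \<eta> * z powr (l - 1 / 2)\<bar> \<le>
     K * ((\<xi> - \<eta>) powr (l + 1/4) * \<xi> powr (- 1/4) * z powr (- 1/4) * (z - \<eta>) powr (- 1/4))"
proof -
  define \<sigma> where "\<sigma> = (z - \<xi>) * \<eta> / ((z - \<eta>) * \<xi>)"
  have s0: "\<sigma> \<le> 0" using z unfolding \<sigma>_def by (intro divide_nonpos_pos mult_nonpos_nonneg) auto
  have s1: "1 - \<sigma> = z * (\<xi> - \<eta>) / ((z - \<eta>) * \<xi>)" using z unfolding \<sigma>_def by (simp add: field_simps)
  define W where "W = (z - \<eta>) powr l * \<xi> powr l / z powr (2 * l)"
  have W0: "W \<ge> 0" unfolding W_def by simp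
  have V: "V1 l z \<xi> \<eta> = W * \<bar>hyp2f1 (- l) (- l) 1 \<sigma>\<bar>" unfolding V1_def W_def \<sigma>_def Let_def by simp
  have "\<bar>V1 l z \<xi> \<eta> * z powr (l - 1 / 2)\<bar> = W * \<bar>hyp2f1 (- l) (- l) 1 \<sigma>\<bar> * z powr (l - 1/2)"
    unfolding V using W0 by (simp add: abs_mult)
  also have "\<dots> \<le> W * (K * (1 - \<sigma>) powr (l + 1/4)) * z powr (l - 1/2)"
    using K[OF s0] W0 by (intro mult_right_mono mult_left_mono) auto
  also have "W * (K * (1 - \<sigma>) powr (l + 1/4)) * z powr (l - 1/2) = K * (W * (1 - \<sigma>) powr (l + 1/4) * z powr (l - 1/2))"
    by simp
  also have "W * (1 - \<sigma>) powr (l + 1/4) * z powr (l - 1/2) =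
      (\<xi> - \<eta>) powr (l + 1/4) * \<xi> powr (- 1/4) * z powr (- 1/4) * (z - \<eta>) powr (- 1/4)"
  proof -
    have p: "z - \<eta> > 0" "\<xi> > 0" "z > 0" "\<xi> - \<eta> > 0" using z by auto
    have "ln (W * (1 - \<sigma>) powr (l + 1/4) * z powr (l - 1/2)) =
        ln ((\<xi> - \<eta>) powr (l + 1/4) * \<xi> powr (- 1/4) * z powr (- 1/4) * (z - \<eta>) powr (- 1/4))"
      unfolding s1 W_def using p by (simp add: ln_mult ln_div) (simp add: algebra_simps)
    then show ?thesis using p unfolding s1 W_def by (subst (asm) ln_inj_iff) auto
  qed
  finally show ?thesis .
qed

definition Sc :: "real \<Rightarrow> real" where
  "Sc l = \<bar>sin (pi * l)\<bar> * (Gamma (1 + l))\<^sup>2 / (pi * Gamma (2 + 2 * l))"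

lemma V2_pt:
  fixes l K \<xi> \<eta> z :: real
  assumes K: "\<And>x. x \<le> 0 \<Longrightarrow> \<bar>hyp2f1 (1 + l) (1 + l) (2 + 2 * l) x\<bar> \<le> K * (1 - x) powr (- l - 3/4)"
  assumes z: "0 < z" "z < \<eta>" "\<eta> < \<xi>"
  shows "\<bar>V2 l z \<xi> \<eta> * z powr (l - 1 / 2)\<bar> \<le> \<bar>Sc l\<bar> * K *
     ((\<xi> - \<eta>) powr (1 + 2 * l) * \<xi> powr (- 1/4) * \<eta> powr (- l - 3/4) * z powr (l + 1/2) *
      (\<eta> - z) powr (- 1/4) * (\<xi> - z) powr (- l - 3/4))"
proof -
  define \<sigma> where "\<sigma> = - (z * (\<xi> - \<eta>)) / (\<xi> * (\<eta> - z))"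
  have s0: "\<sigma> \<le> 0" using z unfolding \<sigma>_def by (intro divide_nonpos_pos) auto
  have s1: "1 - \<sigma> = \<eta> * (\<xi> - z) / (\<xi> * (\<eta> - z))" using z unfolding \<sigma>_def by (simp add: field_simps)
  define W where "W = (\<xi> - \<eta>) powr (1 + 2 * l) * z / (\<xi> powr (l + 1) * (\<eta> - z) powr (l + 1))"
  have W0: "W \<ge> 0" unfolding W_def using z by simp
  have V: "V2 l z \<xi> \<eta> = Sc l * W * \<bar>hyp2f1 (1 + l) (1 + l) (2 + 2 * l) \<sigma>\<bar>"
    unfolding V2_def W_def \<sigma>_def Let_def Sc_def by simp
  have "\<bar>V2 l z \<xi> \<eta> * z powr (l - 1 / 2)\<bar> = \<bar>Sc l\<bar> * W * \<bar>hyp2f1 (1 + l) (1 + l) (2 + 2 * l) \<sigma>\<bar> * z powr (l - 1/2)"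
    unfolding V using W0 by (simp add: abs_mult)
  also have "\<dots> \<le> \<bar>Sc l\<bar> * W * (K * (1 - \<sigma>) powr (- l - 3/4)) * z powr (l - 1/2)"
    using K[OF s0] W0 by (intro mult_right_mono mult_left_mono) auto
  also have "\<bar>Sc l\<bar> * W * (K * (1 - \<sigma>) powr (- l - 3/4)) * z powr (l - 1/2) =
      \<bar>Sc l\<bar> * K * (W * (1 - \<sigma>) powr (- l - 3/4) * z powr (l - 1/2))"
    by simp
  also have "W * (1 - \<sigma>) powr (- l - 3/4) * z powr (l - 1/2) =
      (\<xi> - \<eta>) powr (1 + 2 * l) * \<xi> powr (- 1/4) * \<eta> powr (- l - 3/4) * z powr (l + 1/2) *
      (\<eta> - z) powr (- 1/4) * (\<xi> - z) powr (- l - 3/4)"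
  proof -
    have p: "\<eta> - z > 0" "\<xi> > 0" "z > 0" "\<xi> - \<eta> > 0" "\<eta> > 0" "\<xi> - z > 0" using z by auto
    have "ln (W * (1 - \<sigma>) powr (- l - 3/4) * z powr (l - 1/2)) =
        ln ((\<xi> - \<eta>) powr (1 + 2 * l) * \<xi> powr (- 1/4) * \<eta> powr (- l - 3/4) * z powr (l + 1/2) *
      (\<eta> - z) powr (- 1/4) * (\<xi> - z) powr (- l - 3/4))"
      unfolding s1 W_def using p by (simp add: ln_mult ln_div) (simp add: field_simps)
    then show ?thesis using p unfolding s1 W_def by (subst (asm) ln_inj_iff) auto
  qed
  finally show ?thesis .
qed

lemma int_bound_le:
  fixes g :: "real \<Rightarrow> real" and A :: "real set"
  assumes A: "A \<in> sets lborel"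
  assumes gm: "g \<in> borel_measurable lborel"
  assumes fi: "set_integrable lborel A f"
  assumes le: "\<And>z. z \<in> A \<Longrightarrow> \<bar>g z\<bar> \<le> f z"
  shows "set_integrable lborel A g" "(LBINT z:A. g z) \<le> (LBINT z:A. f z)"
proof -
  show gi: "set_integrable lborel A g"
  proof (rule set_integrable_bound[OF fi])
    show "set_borel_measurable lborel A g"
      unfolding set_borel_measurable_def using gm A by measurable
    show "AE x in lborel. x \<in> A \<longrightarrow> norm (g x) \<le> norm (f x)"
      using le by (auto intro!: AE_I2 order_trans[OF _ abs_ge_self])
  qed
  show "(LBINT z:A. g z) \<le> (LBINT z:A. f z)"
    using gi fi by (rule set_integral_mono) (use le in \<open>auto intro: order_trans[OF abs_ge_self]\<close>)
qed

lemma V1_main: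
  fixes l K :: real
  assumes l: "l \<ge> - 1/2" and K0: "K \<ge> 0"
  assumes K: "\<And>x. x \<le> 0 \<Longrightarrow> \<bar>hyp2f1 (- l) (- l) 1 x\<bar> \<le> K * (1 - x) powr (l + 1/4)"
  assumes e: "0 < \<eta>" "\<eta> < \<xi>"
  shows "set_integrable lborel {\<eta><..<\<xi>} (\<lambda>z. V1 l z \<xi> \<eta> * z powr (l - 1 / 2)) \<and>
      (LBINT z:{\<eta><..<\<xi>}. V1 l z \<xi> \<eta> * z powr (l - 1 / 2))
        \<le> (4 * K) * (\<xi> - \<eta>) powr l * (sqrt \<xi> - sqrt \<eta>)"
proof -
  define \<epsilon> where "\<epsilon> = \<xi> - \<eta>"
  have ep: "\<epsilon> > 0" using e by (simp add: \<epsilon>_def)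
  define g where "g z = V1 l z \<xi> \<eta> * z powr (l - 1 / 2)" for z
  have gm: "g \<in> borel_measurable lborel" unfolding g_def[abs_def] by (rule V1_meas)
  have pt: "\<bar>g z\<bar> \<le> K * (\<epsilon> powr (l + 1/4) * \<xi> powr (- 1/4) * z powr (- 1/4) * (z - \<eta>) powr (- 1/4))"
    if "z \<in> {\<eta><..<\<xi>}" for z
    unfolding g_def \<epsilon>_def by (rule V1_pt[OF K]) (use that e in auto)
  define B1 where "B1 z = (K * \<epsilon> powr (l + 1/4) * \<eta> powr (- 1/2)) * (z - \<eta>) powr (- 1/4)" for z
  define B2 where "B2 z = (K * \<epsilon> powr l) * (z - \<eta>) powr (- 1/2)" for z
  have pl1: "set_integrable lborel {\<eta><..<\<xi>} (\<lambda>z. (z - \<eta>) powr (- 1/4))"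
    "(LBINT z:{\<eta><..<\<xi>}. (z - \<eta>) powr (- 1/4)) = \<epsilon> powr (3/4) / (3/4)"
    using pint_left[of "- 1/4" \<eta> \<xi>] e by (simp_all add: \<epsilon>_def)
  have pl2: "set_integrable lborel {\<eta><..<\<xi>} (\<lambda>z. (z - \<eta>) powr (- 1/2))"
    "(LBINT z:{\<eta><..<\<xi>}. (z - \<eta>) powr (- 1/2)) = \<epsilon> powr (1/2) / (1/2)"
    using pint_left[of "- 1/2" \<eta> \<xi>] e by (simp_all add: \<epsilon>_def)
  have B1i: "set_integrable lborel {\<eta><..<\<xi>} B1"
    unfolding B1_def by (rule set_integrable_mult_right) (rule pl1(1))
  have B2i: "set_integrable lborel {\<eta><..<\<xi>} B2"
    unfolding B2_def by (rule set_integrable_mult_right) (rule pl2(1))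
  have le1: "\<bar>g z\<bar> \<le> B1 z" if z: "z \<in> {\<eta><..<\<xi>}" for z
  proof -
    have z': "\<eta> < z" "z < \<xi>" using z by auto
    have a: "\<xi> powr (- 1/4) \<le> \<eta> powr (- 1/4)" using e by (intro powr_mono2') auto
    have b: "z powr (- 1/4) \<le> \<eta> powr (- 1/4)" using e z' by (intro powr_mono2') auto
    have "\<xi> powr (- 1/4) * z powr (- 1/4) \<le> \<eta> powr (- 1/4) * \<eta> powr (- 1/4)"
      using a b by (intro mult_mono) auto
    also have "\<dots> = \<eta> powr (- 1/2)" using e by (simp add: powr_add[symmetric])
    finally have c: "\<xi> powr (- 1/4) * z powr (- 1/4) \<le> \<eta> powr (- 1/2)" .
    have "K * (\<epsilon> powr (l + 1/4) * \<xi> powr (- 1/4) * z powr (- 1/4) * (z - \<eta>) powr (- 1/4)) =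
        (K * \<epsilon> powr (l + 1/4)) * (\<xi> powr (- 1/4) * z powr (- 1/4)) * (z - \<eta>) powr (- 1/4)"
      by (simp add: mult_ac)
    also have "\<dots> \<le> (K * \<epsilon> powr (l + 1/4)) * \<eta> powr (- 1/2) * (z - \<eta>) powr (- 1/4)"
      using c K0 by (intro mult_right_mono mult_left_mono) auto
    finally show ?thesis using pt[OF z] unfolding B1_def by simp
  qed
  have le2: "\<bar>g z\<bar> \<le> B2 z" if z: "z \<in> {\<eta><..<\<xi>}" for z
  proof -
    have z': "\<eta> < z" "z < \<xi>" using z by auto
    have a: "\<xi> powr (- 1/4) \<le> \<epsilon> powr (- 1/4)" using e ep by (intro powr_mono2') (auto simp: \<epsilon>_def)
    have b: "z powr (- 1/4) \<le> (z - \<eta>) powr (- 1/4)" using e z' by (intro powr_mono2') auto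
    have "\<epsilon> powr (l + 1/4) * \<xi> powr (- 1/4) * z powr (- 1/4) * (z - \<eta>) powr (- 1/4) \<le>
        \<epsilon> powr (l + 1/4) * \<epsilon> powr (- 1/4) * (z - \<eta>) powr (- 1/4) * (z - \<eta>) powr (- 1/4)"
      using a b by (intro mult_right_mono mult_left_mono mult_mono) auto
    also have "\<dots> = \<epsilon> powr l * (z - \<eta>) powr (- 1/2)"
      using ep z' by (simp add: powr_add[symmetric] mult.assoc)
    finally have "\<epsilon> powr (l + 1/4) * \<xi> powr (- 1/4) * z powr (- 1/4) * (z - \<eta>) powr (- 1/4) \<le>
        \<epsilon> powr l * (z - \<eta>) powr (- 1/2)" .
    then have "K * (\<epsilon> powr (l + 1/4) * \<xi> powr (- 1/4) * z powr (- 1/4) * (z - \<eta>) powr (- 1/4)) \<le>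
        K * (\<epsilon> powr l * (z - \<eta>) powr (- 1/2))" using K0 by (rule mult_left_mono)
    then show ?thesis using pt[OF z] unfolding B2_def by (simp add: mult_ac)
  qed
  have gi: "set_integrable lborel {\<eta><..<\<xi>} g"
    using int_bound_le(1)[OF _ gm B1i le1] by simp
  define s where "s = sqrt \<xi>"
  define t where "t = sqrt \<eta>"
  have st: "0 < t" "t < s" using e by (auto simp: s_def t_def)
  have eps: "\<epsilon> = (s - t) * (s + t)" using e by (simp add: s_def t_def \<epsilon>_def algebra_simps)
  have "(LBINT z:{\<eta><..<\<xi>}. g z) \<le> (4 * K) * \<epsilon> powr l * (s - t)"
  proof (cases "\<eta> \<ge> \<xi> / 4")
    case True
    have "(LBINT z:{\<eta><..<\<xi>}. g z) \<le> (LBINT z:{\<eta><..<\<xi>}. B1 z)"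
      using int_bound_le(2)[OF _ gm B1i le1] by simp
    also have "\<dots> = (K * \<epsilon> powr (l + 1/4) * \<eta> powr (- 1/2)) * (\<epsilon> powr (3/4) / (3/4))"
      unfolding B1_def set_integral_mult_right pl1(2) ..
    also have "\<dots> = (4/3) * K * \<epsilon> powr l * (\<epsilon> / t)"
    proof -
      have e1: "\<epsilon> powr (l + 1/4) * \<epsilon> powr (3/4) = \<epsilon> powr l * \<epsilon>"
      proof -
        have "\<epsilon> powr (l + 1/4) * \<epsilon> powr (3/4) = \<epsilon> powr ((l + 1/4) + 3/4)" by (rule powr_add[symmetric])
        also have "(l + 1/4) + 3/4 = l + 1" by simp
        also have "\<epsilon> powr (l + 1) = \<epsilon> powr l * \<epsilon>" using ep by (simp add: powr_add)
        finally show ?thesis .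
      qed
      have e2: "\<eta> powr (- 1/2) = 1 / t"
      proof -
        have "\<eta> powr (- 1/2) * \<eta> powr (1/2) = \<eta> powr (- 1/2 + 1/2)" by (rule powr_add[symmetric])
        also have "\<dots> = 1" using e by simp
        finally have "\<eta> powr (- 1/2) * t = 1" using e by (simp add: t_def powr_half_sqrt)
        then show ?thesis using st by (simp add: eq_divide_eq)
      qed
      have "(K * \<epsilon> powr (l + 1/4) * \<eta> powr (- 1/2)) * (\<epsilon> powr (3/4) / (3/4)) =
          (4/3) * K * (\<epsilon> powr (l + 1/4) * \<epsilon> powr (3/4)) * \<eta> powr (- 1/2)"
        by (simp add: ac_simps)
      then show ?thesis unfolding e1 e2 by simp
    qed
    also have "\<dots> \<le> (4/3) * K * \<epsilon> powr l * (3 * (s - t))"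
    proof -
      have "s \<le> 2 * t"
      proof -
        have "sqrt \<xi> \<le> sqrt (4 * \<eta>)" using True by simp
        also have "sqrt (4 * \<eta>) = 2 * t" by (simp add: t_def real_sqrt_mult)
        finally show ?thesis by (simp add: s_def)
      qed
      then have "\<epsilon> \<le> (s - t) * (3 * t)" unfolding eps using st by (intro mult_left_mono) auto
      then have "\<epsilon> / t \<le> 3 * (s - t)" using st by (simp add: divide_simps mult_ac)
      then show ?thesis using K0 by (intro mult_left_mono) auto
    qed
    also have "\<dots> = (4 * K) * \<epsilon> powr l * (s - t)" by simp
    finally show ?thesis .
  next
    case False
    have "(LBINT z:{\<eta><..<\<xi>}. g z) \<le> (LBINT z:{\<eta><..<\<xi>}. B2 z)"
      using int_bound_le(2)[OF _ gm B2i le2] by simp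
    also have "\<dots> = (K * \<epsilon> powr l) * (\<epsilon> powr (1/2) / (1/2))"
      unfolding B2_def set_integral_mult_right pl2(2) ..
    also have "\<dots> = 2 * K * \<epsilon> powr l * sqrt \<epsilon>"
      using ep by (simp add: powr_half_sqrt)
    also have "\<dots> \<le> 2 * K * \<epsilon> powr l * (2 * (s - t))"
    proof -
      have "sqrt \<epsilon> \<le> s" unfolding s_def \<epsilon>_def using e by simp
      moreover have "2 * t \<le> s"
      proof -
        have "sqrt (4 * \<eta>) \<le> sqrt \<xi>" using False by simp
        moreover have "sqrt (4 * \<eta>) = 2 * t" by (simp add: t_def real_sqrt_mult)
        ultimately show ?thesis by (simp add: s_def)
      qed
      ultimately have "sqrt \<epsilon> \<le> 2 * (s - t)" by simp
      then show ?thesis using K0 by (intro mult_left_mono) auto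
    qed
    also have "\<dots> = (4 * K) * \<epsilon> powr l * (s - t)" by simp
    finally show ?thesis .
  qed
  then show ?thesis using gi unfolding g_def \<epsilon>_def s_def t_def by simp
qed

lemma pint_right_gen:
  fixes a u v w :: real
  assumes a: "a \<noteq> -1" and uv: "u < v" and vw: "v < w"
  shows "set_integrable lborel {u<..<v} (\<lambda>z. (w - z) powr a)"
    "(LBINT z:{u<..<v}. (w - z) powr a) = ((w - u) powr (a + 1) - (w - v) powr (a + 1)) / (a + 1)"
proof -
  have a1: "a + 1 \<noteq> 0" using a by simp
  let ?F = "\<lambda>z. - ((w - z) powr (a + 1) / (a + 1))"
  have D: "DERIV ?F x :> (w - x) powr a" if "ereal u < ereal x" "ereal x < ereal v" for x
  proof -
    have x: "x < w" using that vw by simp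
    have "DERIV (\<lambda>z. (w - z) powr (a + 1)) x :> (a + 1) * (w - x) powr (a + 1 - 1) * (0 - 1)"
      by (rule derivative_eq_intros refl | use x in simp)+
    then have "DERIV ?F x :> - ((a + 1) * (w - x) powr (a + 1 - 1) * (0 - 1) / (a + 1))"
      by (intro DERIV_minus DERIV_cdivide)
    thus ?thesis using a1 by simp
  qed
  have C: "isCont (\<lambda>z. (w - z) powr a) x" if "ereal u < ereal x" "ereal x < ereal v" for x
    using that vw by (intro continuous_intros) auto
  have B: "((?F \<circ> real_of_ereal) \<longlongrightarrow> ?F v) (at_left (ereal v))"
    unfolding ereal_tendsto_simps1 using vw a1 by (intro tendsto_intros) auto
  have A: "((?F \<circ> real_of_ereal) \<longlongrightarrow> ?F u) (at_right (ereal u))"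
    unfolding ereal_tendsto_simps1 using uv vw a1 by (intro tendsto_intros) auto
  note R = interval_integral_FTC_nonneg[of "ereal u" "ereal v" ?F "\<lambda>z. (w - z) powr a", OF _ D C _ A B]
  show "set_integrable lborel {u<..<v} (\<lambda>z. (w - z) powr a)"
    using R(1) uv by simp
  have "(LBINT z:{u<..<v}. (w - z) powr a) = ?F v - ?F u"
    using R(2) uv by (simp add: interval_integral_Ioo)
  also have "\<dots> = ((w - u) powr (a + 1) - (w - v) powr (a + 1)) / (a + 1)"
    by (simp add: diff_divide_distrib)
  finally show "(LBINT z:{u<..<v}. (w - z) powr a) = ((w - u) powr (a + 1) - (w - v) powr (a + 1)) / (a + 1)" .
qed

lemma V2_pre:
  fixes l K :: real
  assumes l: "l \<ge> - 1/2" and K0: "K \<ge> 0"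
  assumes K: "\<And>x. x \<le> 0 \<Longrightarrow> \<bar>hyp2f1 (1 + l) (1 + l) (2 + 2 * l) x\<bar> \<le> K * (1 - x) powr (- l - 3/4)"
  assumes e: "0 < \<eta>" "\<eta> < \<xi>"
  defines "D0 \<equiv> \<bar>Sc l\<bar> * K * (\<xi> - \<eta>) powr (1 + 2 * l) * \<xi> powr (- 1/4) * \<eta> powr (- 1/4)"
  shows "\<And>z. z \<in> {0<..<\<eta>} \<Longrightarrow> \<bar>V2 l z \<xi> \<eta> * z powr (l - 1 / 2)\<bar> \<le>
            D0 * ((\<eta> - z) powr (- 1/4) * (\<xi> - z) powr (- l - 3/4))"
    "set_integrable lborel {0<..<\<eta>} (\<lambda>z. V2 l z \<xi> \<eta> * z powr (l - 1 / 2))"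
    "D0 \<ge> 0"
proof -
  show D00: "D0 \<ge> 0" unfolding D0_def using K0 by simp
  show pt: "\<bar>V2 l z \<xi> \<eta> * z powr (l - 1 / 2)\<bar> \<le> D0 * ((\<eta> - z) powr (- 1/4) * (\<xi> - z) powr (- l - 3/4))"
    if z: "z \<in> {0<..<\<eta>}" for z
  proof -
    have z': "0 < z" "z < \<eta>" using z by auto
    have a: "z powr (l + 1/2) \<le> \<eta> powr (l + 1/2)" using z' l by (intro powr_mono2) auto
    have b: "\<eta> powr (- l - 3/4) * \<eta> powr (l + 1/2) = \<eta> powr (- 1/4)"
    proof -
      have "\<eta> powr (- l - 3/4) * \<eta> powr (l + 1/2) = \<eta> powr ((- l - 3/4) + (l + 1/2))" by (rule powr_add[symmetric])
      also have "(- l - 3/4) + (l + 1/2) = - 1/4" by simp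
      finally show ?thesis .
    qed
    have "\<bar>V2 l z \<xi> \<eta> * z powr (l - 1 / 2)\<bar> \<le> \<bar>Sc l\<bar> * K *
     ((\<xi> - \<eta>) powr (1 + 2 * l) * \<xi> powr (- 1/4) * \<eta> powr (- l - 3/4) * z powr (l + 1/2) *
      (\<eta> - z) powr (- 1/4) * (\<xi> - z) powr (- l - 3/4))"
      by (rule V2_pt[OF K]) (use z' e in auto)
    also have "\<dots> = (\<bar>Sc l\<bar> * K * (\<xi> - \<eta>) powr (1 + 2 * l) * \<xi> powr (- 1/4)) * \<eta> powr (- l - 3/4) * z powr (l + 1/2) *
      ((\<eta> - z) powr (- 1/4) * (\<xi> - z) powr (- l - 3/4))"
      by (simp add: ac_simps)
    also have "\<dots> \<le> (\<bar>Sc l\<bar> * K * (\<xi> - \<eta>) powr (1 + 2 * l) * \<xi> powr (- 1/4)) * \<eta> powr (- l - 3/4) * \<eta> powr (l + 1/2) *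
      ((\<eta> - z) powr (- 1/4) * (\<xi> - z) powr (- l - 3/4))"
      using a K0 by (intro mult_right_mono mult_left_mono) auto
    also have "\<dots> = (\<bar>Sc l\<bar> * K * (\<xi> - \<eta>) powr (1 + 2 * l) * \<xi> powr (- 1/4)) * (\<eta> powr (- l - 3/4) * \<eta> powr (l + 1/2)) *
      ((\<eta> - z) powr (- 1/4) * (\<xi> - z) powr (- l - 3/4))"
      by (simp only: mult.assoc)
    also have "\<dots> = D0 * ((\<eta> - z) powr (- 1/4) * (\<xi> - z) powr (- l - 3/4))"
      unfolding b D0_def by (simp only: mult.assoc)
    finally show ?thesis .
  qed
  define \<epsilon> where "\<epsilon> = \<xi> - \<eta>"
  have ep: "\<epsilon> > 0" using e by (simp add: \<epsilon>_def)
  have pr: "set_integrable lborel {0<..<\<eta>} (\<lambda>z. (\<eta> - z) powr (- 1/4))"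
    using pint_right[of "- 1/4" 0 \<eta>] e by simp
  have fi: "set_integrable lborel {0<..<\<eta>} (\<lambda>z. (D0 * \<epsilon> powr (- l - 3/4)) * (\<eta> - z) powr (- 1/4))"
    by (rule set_integrable_mult_right) (rule pr)
  have le: "\<bar>V2 l z \<xi> \<eta> * z powr (l - 1 / 2)\<bar> \<le> (D0 * \<epsilon> powr (- l - 3/4)) * (\<eta> - z) powr (- 1/4)"
    if z: "z \<in> {0<..<\<eta>}" for z
  proof -
    have z': "0 < z" "z < \<eta>" using z by auto
    have "(\<xi> - z) powr (- l - 3/4) \<le> \<epsilon> powr (- l - 3/4)"
      using z' e l ep by (intro powr_mono2') (auto simp: \<epsilon>_def)
    then have "D0 * ((\<eta> - z) powr (- 1/4) * (\<xi> - z) powr (- l - 3/4)) \<le> D0 * ((\<eta> - z) powr (- 1/4) * \<epsilon> powr (- l - 3/4))"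
      using D00 by (intro mult_left_mono) auto
    then show ?thesis using pt[OF z] by (simp add: ac_simps)
  qed
  show "set_integrable lborel {0<..<\<eta>} (\<lambda>z. V2 l z \<xi> \<eta> * z powr (l - 1 / 2))"
    using int_bound_le(1)[OF _ V2_meas fi le] by simp
qed

lemma V2_neg:
  fixes l K :: real
  assumes l: "l \<ge> - 1/2" "l < 0" and K0: "K \<ge> 0"
  assumes K: "\<And>x. x \<le> 0 \<Longrightarrow> \<bar>hyp2f1 (1 + l) (1 + l) (2 + 2 * l) x\<bar> \<le> K * (1 - x) powr (- l - 3/4)"
  assumes e: "0 < \<eta>" "\<eta> < \<xi>"
  shows "(LBINT z:{0<..<\<eta>}. V2 l z \<xi> \<eta> * z powr (l - 1 / 2))
        \<le> (\<bar>Sc l\<bar> * K * ((4/3) * 2 powr (l + 3/4) + 2 powr (1/4) / (- l))) *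
           (\<xi> - \<eta>) powr (l + 1 / 2) * (1 - \<eta> / \<xi>) powr (l + 1 / 2)"
proof -
  define C where "C = \<bar>Sc l\<bar> * K"
  have C0: "C \<ge> 0" unfolding C_def using K0 by simp
  define \<epsilon> where "\<epsilon> = \<xi> - \<eta>"
  have ep: "\<epsilon> > 0" using e by (simp add: \<epsilon>_def)
  define D0 where "D0 = \<bar>Sc l\<bar> * K * (\<xi> - \<eta>) powr (1 + 2 * l) * \<xi> powr (- 1/4) * \<eta> powr (- 1/4)"
  have pre1: "\<And>z. z \<in> {0<..<\<eta>} \<Longrightarrow> \<bar>V2 l z \<xi> \<eta> * z powr (l - 1 / 2)\<bar> \<le>
            D0 * ((\<eta> - z) powr (- 1/4) * (\<xi> - z) powr (- l - 3/4))"
    unfolding D0_def by (rule V2_pre(1)[OF l(1) K0 K e])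
  have pre2: "set_integrable lborel {0<..<\<eta>} (\<lambda>z. V2 l z \<xi> \<eta> * z powr (l - 1 / 2))"
    by (rule V2_pre(2)[OF l(1) K0 K e])
  have pre3: "D0 \<ge> 0" unfolding D0_def using K0 by simp
  define g where "g z = V2 l z \<xi> \<eta> * z powr (l - 1 / 2)" for z
  have gm: "g \<in> borel_measurable lborel" unfolding g_def[abs_def] by (rule V2_meas)
  define T0 where "T0 = \<epsilon> powr (1 + 2 * l) * \<xi> powr (- l - 1/2)"
  have T0eq: "\<epsilon> powr (l + 1 / 2) * (1 - \<eta> / \<xi>) powr (l + 1 / 2) = T0"
  proof -
    have p: "\<epsilon> > 0" "\<xi> > 0" using e ep by auto
    have q: "1 - \<eta> / \<xi> = \<epsilon> / \<xi>" using e by (simp add: \<epsilon>_def field_simps)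
    have "ln (\<epsilon> powr (l + 1 / 2) * (\<epsilon> / \<xi>) powr (l + 1 / 2)) = ln T0"
      unfolding T0_def using p by (simp add: ln_mult ln_div) (simp add: field_simps)
    then show ?thesis unfolding q T0_def using p by (subst (asm) ln_inj_iff) auto
  qed
  have D0eq: "D0 = C * \<epsilon> powr (1 + 2 * l) * \<xi> powr (- 1/4) * \<eta> powr (- 1/4)"
    unfolding D0_def C_def \<epsilon>_def ..
  have "(LBINT z:{0<..<\<eta>}. g z) \<le> (C * ((4/3) * 2 powr (l + 3/4) + 2 powr (1/4) / (- l))) * T0"
  proof (cases "\<eta> \<le> \<xi> / 2")
    case True
    define B where "B z = (D0 * (\<xi> / 2) powr (- l - 3/4)) * (\<eta> - z) powr (- 1/4)" for z
    have pr: "set_integrable lborel {0<..<\<eta>} (\<lambda>z. (\<eta> - z) powr (- 1/4))"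
      "(LBINT z:{0<..<\<eta>}. (\<eta> - z) powr (- 1/4)) = \<eta> powr (3/4) / (3/4)"
      using pint_right[of "- 1/4" 0 \<eta>] e by simp_all
    have Bi: "set_integrable lborel {0<..<\<eta>} B" unfolding B_def by (rule set_integrable_mult_right) (rule pr(1))
    have le: "\<bar>g z\<bar> \<le> B z" if z: "z \<in> {0<..<\<eta>}" for z
    proof -
      have z': "0 < z" "z < \<eta>" using z by auto
      have "(\<xi> - z) powr (- l - 3/4) \<le> (\<xi> / 2) powr (- l - 3/4)"
        using z' e l True by (intro powr_mono2') auto
      then have "D0 * ((\<eta> - z) powr (- 1/4) * (\<xi> - z) powr (- l - 3/4)) \<le> D0 * ((\<eta> - z) powr (- 1/4) * (\<xi> / 2) powr (- l - 3/4))"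
        using pre3 by (intro mult_left_mono) auto
      then show ?thesis using pre1[OF z] unfolding g_def B_def by (simp add: ac_simps)
    qed
    have "(LBINT z:{0<..<\<eta>}. g z) \<le> (LBINT z:{0<..<\<eta>}. B z)"
      using int_bound_le(2)[OF _ gm Bi le] by simp
    also have "\<dots> = (D0 * (\<xi> / 2) powr (- l - 3/4)) * (\<eta> powr (3/4) / (3/4))"
      unfolding B_def set_integral_mult_right pr(2) ..
    also have "\<dots> = (4/3) * C * \<epsilon> powr (1 + 2 * l) * (\<xi> powr (- 1/4) * (\<xi> / 2) powr (- l - 3/4)) * (\<eta> powr (- 1/4) * \<eta> powr (3/4))"
      unfolding D0eq by (simp add: ac_simps)
    also have "\<dots> \<le> (4/3) * C * \<epsilon> powr (1 + 2 * l) * (\<xi> powr (- 1/4) * (\<xi> / 2) powr (- l - 3/4)) * \<xi> powr (1/2)"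
    proof -
      have "\<eta> powr (- 1/4) * \<eta> powr (3/4) = \<eta> powr (1/2)"
      proof -
        have "\<eta> powr (- 1/4) * \<eta> powr (3/4) = \<eta> powr (- 1/4 + 3/4)" by (rule powr_add[symmetric])
        also have "- 1/4 + 3/4 = (1/2::real)" by simp
        finally show ?thesis .
      qed
      also have "\<dots> \<le> \<xi> powr (1/2)" using e by (intro powr_mono2) auto
      finally show ?thesis using C0 ep by (intro mult_left_mono) auto
    qed
    also have "\<dots> = ((4/3) * 2 powr (l + 3/4) * C) * T0"
    proof -
      have p: "\<xi> > 0" using e by auto
      have "ln (\<xi> powr (- 1/4) * (\<xi> / 2) powr (- l - 3/4) * \<xi> powr (1/2)) = ln (2 powr (l + 3/4) * \<xi> powr (- l - 1/2))"
        using p by (simp add: ln_mult ln_div) (simp add: field_simps)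
      then have "\<xi> powr (- 1/4) * (\<xi> / 2) powr (- l - 3/4) * \<xi> powr (1/2) = 2 powr (l + 3/4) * \<xi> powr (- l - 1/2)"
        using p by (subst (asm) ln_inj_iff) auto
      then show ?thesis unfolding T0_def by (simp add: ac_simps)
    qed
    also have "\<dots> \<le> (C * ((4/3) * 2 powr (l + 3/4) + 2 powr (1/4) / (- l))) * T0"
    proof -
      define X where "X = 2 powr (1/4) / (- l)"
      have "0 \<le> X" unfolding X_def by (intro divide_nonneg_pos) (use l in auto)
      then have "0 \<le> C * X" using C0 by simp
      then have "(4/3) * 2 powr (l + 3/4) * C \<le> C * ((4/3) * 2 powr (l + 3/4) + X)"
        by (simp add: distrib_left mult_ac)
      then have "(4/3) * 2 powr (l + 3/4) * C \<le> C * ((4/3) * 2 powr (l + 3/4) + 2 powr (1/4) / (- l))"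
        unfolding X_def .
      moreover have "T0 \<ge> 0" unfolding T0_def by simp
      ultimately show ?thesis by (rule mult_right_mono)
    qed
    finally show ?thesis .
  next
    case False
    define B where "B z = D0 * (\<eta> - z) powr (- 1 - l)" for z
    have pr: "set_integrable lborel {0<..<\<eta>} (\<lambda>z. (\<eta> - z) powr (- 1 - l))"
      "(LBINT z:{0<..<\<eta>}. (\<eta> - z) powr (- 1 - l)) = \<eta> powr (- l) / (- l)"
      using pint_right[of "- 1 - l" 0 \<eta>] e l by simp_all
    have Bi: "set_integrable lborel {0<..<\<eta>} B" unfolding B_def by (rule set_integrable_mult_right) (rule pr(1))
    have le: "\<bar>g z\<bar> \<le> B z" if z: "z \<in> {0<..<\<eta>}" for z
    proof -
      have z': "0 < z" "z < \<eta>" using z by auto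
      have "(\<xi> - z) powr (- l - 3/4) \<le> (\<eta> - z) powr (- l - 3/4)"
        using z' e l by (intro powr_mono2') auto
      then have "(\<eta> - z) powr (- 1/4) * (\<xi> - z) powr (- l - 3/4) \<le> (\<eta> - z) powr (- 1/4) * (\<eta> - z) powr (- l - 3/4)"
        by (intro mult_left_mono) auto
      also have "\<dots> = (\<eta> - z) powr (- 1 - l)"
      proof -
        have "(\<eta> - z) powr (- 1/4) * (\<eta> - z) powr (- l - 3/4) = (\<eta> - z) powr (- 1/4 + (- l - 3/4))"
          by (rule powr_add[symmetric])
        also have "- 1/4 + (- l - 3/4) = - 1 - l" by simp
        finally show ?thesis .
      qed
      finally have "D0 * ((\<eta> - z) powr (- 1/4) * (\<xi> - z) powr (- l - 3/4)) \<le> D0 * (\<eta> - z) powr (- 1 - l)"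
        using pre3 by (intro mult_left_mono) auto
      then show ?thesis using pre1[OF z] unfolding g_def B_def by simp
    qed
    have "(LBINT z:{0<..<\<eta>}. g z) \<le> (LBINT z:{0<..<\<eta>}. B z)"
      using int_bound_le(2)[OF _ gm Bi le] by simp
    also have "\<dots> = D0 * (\<eta> powr (- l) / (- l))"
      unfolding B_def set_integral_mult_right pr(2) ..
    also have "\<dots> = (C / (- l)) * \<epsilon> powr (1 + 2 * l) * \<xi> powr (- 1/4) * (\<eta> powr (- 1/4) * \<eta> powr (- l))"
      unfolding D0eq by (simp add: ac_simps)
    also have "\<dots> \<le> (C / (- l)) * \<epsilon> powr (1 + 2 * l) * \<xi> powr (- 1/4) * ((\<xi> / 2) powr (- 1/4) * \<xi> powr (- l))"
    proof -
      have a: "\<eta> powr (- 1/4) \<le> (\<xi> / 2) powr (- 1/4)" using False e by (intro powr_mono2') auto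
      have b: "\<eta> powr (- l) \<le> \<xi> powr (- l)" using e l by (intro powr_mono2) auto
      have "\<eta> powr (- 1/4) * \<eta> powr (- l) \<le> (\<xi> / 2) powr (- 1/4) * \<xi> powr (- l)"
        using a b by (intro mult_mono) auto
      moreover have "0 \<le> (C / (- l)) * \<epsilon> powr (1 + 2 * l) * \<xi> powr (- 1/4)"
        by (intro mult_nonneg_nonneg divide_nonneg_pos) (use C0 l in auto)
      ultimately show ?thesis by (rule mult_left_mono)
    qed
    also have "\<dots> = (2 powr (1/4) / (- l) * C) * T0"
    proof -
      have p: "\<xi> > 0" using e by auto
      have "ln (\<xi> powr (- 1/4) * ((\<xi> / 2) powr (- 1/4) * \<xi> powr (- l))) = ln (2 powr (1/4) * \<xi> powr (- l - 1/2))"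
        using p by (simp add: ln_mult ln_div) (simp add: field_simps)
      then have "\<xi> powr (- 1/4) * ((\<xi> / 2) powr (- 1/4) * \<xi> powr (- l)) = 2 powr (1/4) * \<xi> powr (- l - 1/2)"
        using p by (subst (asm) ln_inj_iff) auto
      then show ?thesis unfolding T0_def by (simp add: ac_simps)
    qed
    also have "\<dots> \<le> (C * ((4/3) * 2 powr (l + 3/4) + 2 powr (1/4) / (- l))) * T0"
    proof -
      have "0 \<le> (4/3) * 2 powr (l + 3/4)" by simp
      then have "2 powr (1/4) / (- l) * C \<le> C * ((4/3) * 2 powr (l + 3/4) + 2 powr (1/4) / (- l))"
        using C0 by (simp add: algebra_simps mult_nonneg_nonneg)
      moreover have "T0 \<ge> 0" unfolding T0_def by simp
      ultimately show ?thesis by (rule mult_right_mono)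
    qed
    finally show ?thesis .
  qed
  then show ?thesis unfolding g_def C_def using T0eq[symmetric] by (simp add: \<epsilon>_def ac_simps)
qed

lemma V2_pos:
  fixes l K :: real
  assumes l: "l > 0" and K0: "K \<ge> 0"
  assumes K: "\<And>x. x \<le> 0 \<Longrightarrow> \<bar>hyp2f1 (1 + l) (1 + l) (2 + 2 * l) x\<bar> \<le> K * (1 - x) powr (- l - 3/4)"
  assumes e: "0 < \<eta>" "\<eta> < \<xi>"
  shows "(LBINT z:{0<..<\<eta>}. V2 l z \<xi> \<eta> * z powr (l - 1 / 2))
        \<le> (\<bar>Sc l\<bar> * K * (4 * 2 powr (l + 3/4) + 2 * 2 powr (1/4) * (4/3 + 1 / l))) *
           (\<xi> - \<eta>) powr l * (sqrt \<xi> - sqrt \<eta>)"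
proof -
  have l1: "l \<ge> - 1/2" using l by simp
  define C where "C = \<bar>Sc l\<bar> * K"
  have C0: "C \<ge> 0" unfolding C_def using K0 by simp
  define \<epsilon> where "\<epsilon> = \<xi> - \<eta>"
  have ep: "\<epsilon> > 0" using e by (simp add: \<epsilon>_def)
  define D0 where "D0 = \<bar>Sc l\<bar> * K * (\<xi> - \<eta>) powr (1 + 2 * l) * \<xi> powr (- 1/4) * \<eta> powr (- 1/4)"
  have pre1: "\<And>z. z \<in> {0<..<\<eta>} \<Longrightarrow> \<bar>V2 l z \<xi> \<eta> * z powr (l - 1 / 2)\<bar> \<le>
            D0 * ((\<eta> - z) powr (- 1/4) * (\<xi> - z) powr (- l - 3/4))"
    unfolding D0_def by (rule V2_pre(1)[OF l1 K0 K e])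
  have pre2: "set_integrable lborel {0<..<\<eta>} (\<lambda>z. V2 l z \<xi> \<eta> * z powr (l - 1 / 2))"
    by (rule V2_pre(2)[OF l1 K0 K e])
  have pre3: "D0 \<ge> 0" unfolding D0_def using K0 by simp
  define g where "g z = V2 l z \<xi> \<eta> * z powr (l - 1 / 2)" for z
  have gm: "g \<in> borel_measurable lborel" unfolding g_def[abs_def] by (rule V2_meas)
  have gi: "set_integrable lborel {0<..<\<eta>} g" unfolding g_def using pre2 .
  have D0eq: "D0 = C * \<epsilon> powr (1 + 2 * l) * \<xi> powr (- 1/4) * \<eta> powr (- 1/4)"
    unfolding D0_def C_def \<epsilon>_def ..
  define s where "s = sqrt \<xi>"
  define t where "t = sqrt \<eta>"
  have st: "0 < t" "t < s" using e by (auto simp: s_def t_def)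
  have eps: "\<epsilon> = (s - t) * (s + t)" using e by (simp add: s_def t_def \<epsilon>_def algebra_simps)
  define A where "A = C * (4 * 2 powr (l + 3/4) + 2 * 2 powr (1/4) * (4/3 + 1 / l))"
  have "(LBINT z:{0<..<\<eta>}. g z) \<le> A * \<epsilon> powr l * (s - t)"
  proof (cases "\<eta> \<le> \<xi> / 2")
    case True
    define B where "B z = (D0 * (\<xi> / 2) powr (- l - 3/4)) * (\<eta> - z) powr (- 1/4)" for z
    have pr: "set_integrable lborel {0<..<\<eta>} (\<lambda>z. (\<eta> - z) powr (- 1/4))"
      "(LBINT z:{0<..<\<eta>}. (\<eta> - z) powr (- 1/4)) = \<eta> powr (3/4) / (3/4)"
      using pint_right[of "- 1/4" 0 \<eta>] e by simp_all
    have Bi: "set_integrable lborel {0<..<\<eta>} B" unfolding B_def by (rule set_integrable_mult_right) (rule pr(1))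
    have le: "\<bar>g z\<bar> \<le> B z" if z: "z \<in> {0<..<\<eta>}" for z
    proof -
      have z': "0 < z" "z < \<eta>" using z by auto
      have "(\<xi> - z) powr (- l - 3/4) \<le> (\<xi> / 2) powr (- l - 3/4)"
        using z' e l True by (intro powr_mono2') auto
      then have "D0 * ((\<eta> - z) powr (- 1/4) * (\<xi> - z) powr (- l - 3/4)) \<le> D0 * ((\<eta> - z) powr (- 1/4) * (\<xi> / 2) powr (- l - 3/4))"
        using pre3 by (intro mult_left_mono) auto
      then show ?thesis using pre1[OF z] unfolding g_def B_def by (simp add: ac_simps)
    qed
    have "(LBINT z:{0<..<\<eta>}. g z) \<le> (LBINT z:{0<..<\<eta>}. B z)"
      using int_bound_le(2)[OF _ gm Bi le] by simp
    also have "\<dots> = (D0 * (\<xi> / 2) powr (- l - 3/4)) * (\<eta> powr (3/4) / (3/4))"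
      unfolding B_def set_integral_mult_right pr(2) ..
    also have "\<dots> = (4/3) * C * (\<epsilon> powr (1 + 2 * l) * (\<xi> powr (- 1/4) * (\<xi> / 2) powr (- l - 3/4))) * (\<eta> powr (- 1/4) * \<eta> powr (3/4))"
      unfolding D0eq by (simp add: ac_simps)
    also have "\<eta> powr (- 1/4) * \<eta> powr (3/4) = t"
    proof -
      have "\<eta> powr (- 1/4) * \<eta> powr (3/4) = \<eta> powr (- 1/4 + 3/4)" by (rule powr_add[symmetric])
      also have "- 1/4 + 3/4 = (1/2::real)" by simp
      finally show ?thesis using e by (simp add: t_def powr_half_sqrt)
    qed
    also have "\<epsilon> powr (1 + 2 * l) * (\<xi> powr (- 1/4) * (\<xi> / 2) powr (- l - 3/4)) = 2 powr (l + 3/4) * (\<epsilon> powr l * (\<epsilon> / \<xi>) powr (l + 1))"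
    proof -
      have p: "\<xi> > 0" "\<epsilon> > 0" using e ep by auto
      have "ln (\<epsilon> powr (1 + 2 * l) * (\<xi> powr (- 1/4) * (\<xi> / 2) powr (- l - 3/4))) = ln (2 powr (l + 3/4) * (\<epsilon> powr l * (\<epsilon> / \<xi>) powr (l + 1)))"
        using p by (simp add: ln_mult ln_div) (simp add: field_simps)
      then show ?thesis using p by (subst (asm) ln_inj_iff) auto
    qed
    also have "(4/3) * C * (2 powr (l + 3/4) * (\<epsilon> powr l * (\<epsilon> / \<xi>) powr (l + 1))) * t \<le>
        (4/3) * C * (2 powr (l + 3/4) * (\<epsilon> powr l * 1)) * (3 * (s - t))"
    proof (rule mult_mono)
      have "(\<epsilon> / \<xi>) powr (l + 1) \<le> 1" using e ep l by (intro powr_le1) (auto simp: \<epsilon>_def)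
      then show "(4/3) * C * (2 powr (l + 3/4) * (\<epsilon> powr l * (\<epsilon> / \<xi>) powr (l + 1))) \<le>
          (4/3) * C * (2 powr (l + 3/4) * (\<epsilon> powr l * 1))"
        using C0 by (intro mult_left_mono) auto
      have "16 * \<eta> \<le> 9 * \<xi>" using True e by simp
      moreover have "(4 * t)\<^sup>2 = 16 * \<eta>" "(3 * s)\<^sup>2 = 9 * \<xi>" using e by (simp_all add: t_def s_def power_mult_distrib)
      ultimately have "(4 * t)\<^sup>2 \<le> (3 * s)\<^sup>2" by simp
      then have "4 * t \<le> 3 * s" by (rule power2_le_imp_le) (use st in auto)
      then show "t \<le> 3 * (s - t)" by simp
    qed (use C0 st in auto)
    also have "\<dots> = (4 * 2 powr (l + 3/4) * C) * \<epsilon> powr l * (s - t)" by simp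
    also have "\<dots> \<le> A * \<epsilon> powr l * (s - t)"
    proof -
      define X where "X = 2 * 2 powr (1/4) * (4/3 + 1 / l)"
      have "0 \<le> X" unfolding X_def using l by simp
      then have "0 \<le> C * X" using C0 by simp
      then have "4 * 2 powr (l + 3/4) * C \<le> C * (4 * 2 powr (l + 3/4) + X)"
        by (simp add: distrib_left mult_ac)
      then have "4 * 2 powr (l + 3/4) * C \<le> A" unfolding A_def X_def .
      then show ?thesis using st by (intro mult_right_mono) auto
    qed
    finally show ?thesis .
  next
    case False
    define m where "m = \<eta> - \<epsilon>"
    have m: "0 < m" "m < \<eta>" using False e ep by (auto simp: m_def \<epsilon>_def)
    have sum: "(LBINT x=ereal 0..ereal m. g x) + (LBINT x=ereal m..ereal \<eta>. g x) = (LBINT x=ereal 0..ereal \<eta>. g x)"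
      by (rule interval_integral_sum) (use gi m in \<open>simp add: interval_lebesgue_integrable_def min_def max_def\<close>)
    have split: "(LBINT z:{0<..<\<eta>}. g z) = (LBINT z:{0<..<m}. g z) + (LBINT z:{m<..<\<eta>}. g z)"
      using sum m e by (simp add: interval_integral_Ioo)
    define B1 where "B1 z = (D0 * \<epsilon> powr (- l - 3/4)) * (\<eta> - z) powr (- 1/4)" for z
    define B2 where "B2 z = D0 * (\<eta> - z) powr (- 1 - l)" for z
    have pr1: "set_integrable lborel {m<..<\<eta>} (\<lambda>z. (\<eta> - z) powr (- 1/4))"
      "(LBINT z:{m<..<\<eta>}. (\<eta> - z) powr (- 1/4)) = (\<eta> - m) powr (3/4) / (3/4)"
      using pint_right[of "- 1/4" m \<eta>] m by simp_all
    have pr2: "set_integrable lborel {0<..<m} (\<lambda>z. (\<eta> - z) powr (- 1 - l))"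
      "(LBINT z:{0<..<m}. (\<eta> - z) powr (- 1 - l)) = ((\<eta> - 0) powr (- 1 - l + 1) - (\<eta> - m) powr (- 1 - l + 1)) / (- 1 - l + 1)"
      using pint_right_gen[of "- 1 - l" 0 m \<eta>] m l by simp_all
    have B1i: "set_integrable lborel {m<..<\<eta>} B1" unfolding B1_def by (rule set_integrable_mult_right) (rule pr1(1))
    have B2i: "set_integrable lborel {0<..<m} B2" unfolding B2_def by (rule set_integrable_mult_right) (rule pr2(1))
    have le1: "\<bar>g z\<bar> \<le> B1 z" if z: "z \<in> {m<..<\<eta>}" for z
    proof -
      have z': "0 < z" "z < \<eta>" using z m by auto
      have "(\<xi> - z) powr (- l - 3/4) \<le> \<epsilon> powr (- l - 3/4)"
        using z' e l ep by (intro powr_mono2') (auto simp: \<epsilon>_def)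
      then have "D0 * ((\<eta> - z) powr (- 1/4) * (\<xi> - z) powr (- l - 3/4)) \<le> D0 * ((\<eta> - z) powr (- 1/4) * \<epsilon> powr (- l - 3/4))"
        using pre3 by (intro mult_left_mono) auto
      then show ?thesis using pre1[of z] z' unfolding g_def B1_def by (simp add: ac_simps)
    qed
    have le2: "\<bar>g z\<bar> \<le> B2 z" if z: "z \<in> {0<..<m}" for z
    proof -
      have z': "0 < z" "z < \<eta>" using z m by auto
      have "(\<xi> - z) powr (- l - 3/4) \<le> (\<eta> - z) powr (- l - 3/4)"
        using z' e l by (intro powr_mono2') auto
      then have "(\<eta> - z) powr (- 1/4) * (\<xi> - z) powr (- l - 3/4) \<le> (\<eta> - z) powr (- 1/4) * (\<eta> - z) powr (- l - 3/4)"
        by (intro mult_left_mono) auto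
      also have "\<dots> = (\<eta> - z) powr (- 1 - l)"
      proof -
        have "(\<eta> - z) powr (- 1/4) * (\<eta> - z) powr (- l - 3/4) = (\<eta> - z) powr (- 1/4 + (- l - 3/4))"
          by (rule powr_add[symmetric])
        also have "- 1/4 + (- l - 3/4) = - 1 - l" by simp
        finally show ?thesis .
      qed
      finally have "D0 * ((\<eta> - z) powr (- 1/4) * (\<xi> - z) powr (- l - 3/4)) \<le> D0 * (\<eta> - z) powr (- 1 - l)"
        using pre3 by (intro mult_left_mono) auto
      then show ?thesis using pre1[of z] z' unfolding g_def B2_def by simp
    qed
    have gi1: "set_integrable lborel {m<..<\<eta>} g" by (rule int_bound_le(1)[OF _ gm B1i le1]) simp
    have gi2: "set_integrable lborel {0<..<m} g" by (rule int_bound_le(1)[OF _ gm B2i le2]) simp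
    have I1: "(LBINT z:{m<..<\<eta>}. g z) \<le> (4/3) * D0 * \<epsilon> powr (- l)"
    proof -
      have "(LBINT z:{m<..<\<eta>}. g z) \<le> (LBINT z:{m<..<\<eta>}. B1 z)"
        using int_bound_le(2)[OF _ gm B1i le1] by simp
      also have "\<dots> = (D0 * \<epsilon> powr (- l - 3/4)) * ((\<eta> - m) powr (3/4) / (3/4))"
        unfolding B1_def set_integral_mult_right pr1(2) ..
      also have "\<dots> = (4/3) * D0 * (\<epsilon> powr (- l - 3/4) * \<epsilon> powr (3/4))"
        by (simp add: m_def ac_simps)
      also have "\<epsilon> powr (- l - 3/4) * \<epsilon> powr (3/4) = \<epsilon> powr (- l)"
      proof -
        have "\<epsilon> powr (- l - 3/4) * \<epsilon> powr (3/4) = \<epsilon> powr ((- l - 3/4) + 3/4)" by (rule powr_add[symmetric])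
        also have "(- l - 3/4) + 3/4 = - l" by simp
        finally show ?thesis .
      qed
      finally show ?thesis .
    qed
    have I2: "(LBINT z:{0<..<m}. g z) \<le> D0 * (\<epsilon> powr (- l) / l)"
    proof -
      have "(LBINT z:{0<..<m}. g z) \<le> (LBINT z:{0<..<m}. B2 z)"
        using int_bound_le(2)[OF _ gm B2i le2] by simp
      also have "\<dots> = D0 * ((\<eta> powr (- l) - \<epsilon> powr (- l)) / (- l))"
        unfolding B2_def set_integral_mult_right pr2(2) by (simp add: m_def)
      also have "\<dots> \<le> D0 * (\<epsilon> powr (- l) / l)"
      proof -
        have "(\<eta> powr (- l) - \<epsilon> powr (- l)) / (- l) = (\<epsilon> powr (- l) - \<eta> powr (- l)) / l"
          using l by (simp add: field_simps)
        also have "\<dots> \<le> \<epsilon> powr (- l) / l" using l by (intro divide_right_mono) auto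
        finally show ?thesis using pre3 by (intro mult_left_mono) auto
      qed
      finally show ?thesis .
    qed
    have "(LBINT z:{0<..<\<eta>}. g z) \<le> (4/3) * D0 * \<epsilon> powr (- l) + D0 * (\<epsilon> powr (- l) / l)"
      using split I1 I2 by linarith
    also have "\<dots> = (4/3 + 1 / l) * (D0 * \<epsilon> powr (- l))" by (simp add: field_simps)
    also have "\<dots> \<le> (4/3 + 1 / l) * (C * \<epsilon> powr (1 + 2 * l) * \<xi> powr (- 1/4) * (\<xi> / 2) powr (- 1/4) * \<epsilon> powr (- l))"
    proof -
      have "\<eta> powr (- 1/4) \<le> (\<xi> / 2) powr (- 1/4)" using False e by (intro powr_mono2') auto
      then have "D0 \<le> C * \<epsilon> powr (1 + 2 * l) * \<xi> powr (- 1/4) * (\<xi> / 2) powr (- 1/4)"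
        unfolding D0eq using C0 by (intro mult_left_mono) auto
      then show ?thesis using l by (intro mult_left_mono mult_right_mono) auto
    qed
    also have "C * \<epsilon> powr (1 + 2 * l) * \<xi> powr (- 1/4) * (\<xi> / 2) powr (- 1/4) * \<epsilon> powr (- l) =
        C * 2 powr (1/4) * \<epsilon> powr l * (\<epsilon> / s)"
    proof -
      have p: "\<xi> > 0" "\<epsilon> > 0" using e ep by auto
      have "ln (\<epsilon> powr (1 + 2 * l) * \<xi> powr (- 1/4) * (\<xi> / 2) powr (- 1/4) * \<epsilon> powr (- l)) =
          ln (2 powr (1/4) * \<epsilon> powr l * (\<epsilon> / \<xi> powr (1/2)))"
        using p by (simp add: ln_mult ln_div) (simp add: field_simps)
      then have "\<epsilon> powr (1 + 2 * l) * \<xi> powr (- 1/4) * (\<xi> / 2) powr (- 1/4) * \<epsilon> powr (- l) =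
          2 powr (1/4) * \<epsilon> powr l * (\<epsilon> / \<xi> powr (1/2))"
        using p by (subst (asm) ln_inj_iff) auto
      then show ?thesis using p by (simp add: s_def powr_half_sqrt ac_simps)
    qed
    also have "(4/3 + 1 / l) * (C * 2 powr (1/4) * \<epsilon> powr l * (\<epsilon> / s)) \<le>
        (4/3 + 1 / l) * (C * 2 powr (1/4) * \<epsilon> powr l * (2 * (s - t)))"
    proof -
      have "\<epsilon> \<le> (s - t) * (2 * s)" unfolding eps using st by (intro mult_left_mono) auto
      then have "\<epsilon> / s \<le> 2 * (s - t)" using st by (simp add: divide_simps mult_ac)
      then show ?thesis using l C0 by (intro mult_left_mono) auto
    qed
    also have "\<dots> = (C * (2 * 2 powr (1/4) * (4/3 + 1 / l))) * \<epsilon> powr l * (s - t)" by (simp only: mult_ac)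
    also have "\<dots> \<le> A * \<epsilon> powr l * (s - t)"
    proof -
      have "0 \<le> C * (4 * 2 powr (l + 3/4))" using C0 by simp
      then have "C * (2 * 2 powr (1/4) * (4/3 + 1 / l)) \<le> A" unfolding A_def by (simp add: distrib_left)
      then show ?thesis using st by (intro mult_right_mono) auto
    qed
    finally show ?thesis .
  qed
  then show ?thesis unfolding g_def A_def C_def \<epsilon>_def s_def t_def by simp
qed

theorem lemmaA2:
  fixes l :: real
  assumes "l \<ge> - 1 / 2"
  shows "\<exists>A1 A2 :: real. \<forall>\<xi> \<eta> :: real. 0 < \<eta> \<and> \<eta> < \<xi> \<longrightarrow>
     (set_integrable lborel {\<eta><..<\<xi>} (\<lambda>z. V1 l z \<xi> \<eta> * z powr (l - 1 / 2)) \<and>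
      (LBINT z:{\<eta><..<\<xi>}. V1 l z \<xi> \<eta> * z powr (l - 1 / 2))
        \<le> A1 * (\<xi> - \<eta>) powr l * (sqrt \<xi> - sqrt \<eta>)) \<and>
     (l > 0 \<longrightarrow>
      set_integrable lborel {0<..<\<eta>} (\<lambda>z. V2 l z \<xi> \<eta> * z powr (l - 1 / 2)) \<and>
      (LBINT z:{0<..<\<eta>}. V2 l z \<xi> \<eta> * z powr (l - 1 / 2))
        \<le> A2 * (\<xi> - \<eta>) powr l * (sqrt \<xi> - sqrt \<eta>)) \<and>
     (l < 0 \<longrightarrow>
      set_integrable lborel {0<..<\<eta>} (\<lambda>z. V2 l z \<xi> \<eta> * z powr (l - 1 / 2)) \<and>
      (LBINT z:{0<..<\<eta>}. V2 l z \<xi> \<eta> * z powr (l - 1 / 2))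
        \<le> A2 * (\<xi> - \<eta>) powr (l + 1 / 2) * (1 - \<eta> / \<xi>) powr (l + 1 / 2))"
proof -
  have l: "l \<ge> - 1/2" using assms by simp
  obtain K1 where K10: "K1 \<ge> 0" and K1: "\<forall>x\<le>0. \<bar>hyp2f1 (- l) (- l) 1 x\<bar> \<le> K1 * (1 - x) powr (l + 1/4)"
    using hb1[OF l] by blast
  obtain K2 where K20: "K2 \<ge> 0" and K2: "\<forall>x\<le>0. \<bar>hyp2f1 (1 + l) (1 + l) (2 + 2 * l) x\<bar> \<le> K2 * (1 - x) powr (- l - 3/4)"
    using hb2[OF l] by blast
  have K1': "\<And>x. x \<le> 0 \<Longrightarrow> \<bar>hyp2f1 (- l) (- l) 1 x\<bar> \<le> K1 * (1 - x) powr (l + 1/4)" using K1 by blast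
  have K2': "\<And>x. x \<le> 0 \<Longrightarrow> \<bar>hyp2f1 (1 + l) (1 + l) (2 + 2 * l) x\<bar> \<le> K2 * (1 - x) powr (- l - 3/4)" using K2 by blast
  define A2 where "A2 = (if l > 0 then \<bar>Sc l\<bar> * K2 * (4 * 2 powr (l + 3/4) + 2 * 2 powr (1/4) * (4/3 + 1 / l))
      else \<bar>Sc l\<bar> * K2 * ((4/3) * 2 powr (l + 3/4) + 2 powr (1/4) / (- l)))"
  have "0 < \<eta> \<and> \<eta> < \<xi> \<longrightarrow>
     (set_integrable lborel {\<eta><..<\<xi>} (\<lambda>z. V1 l z \<xi> \<eta> * z powr (l - 1 / 2)) \<and>
      (LBINT z:{\<eta><..<\<xi>}. V1 l z \<xi> \<eta> * z powr (l - 1 / 2))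
        \<le> (4 * K1) * (\<xi> - \<eta>) powr l * (sqrt \<xi> - sqrt \<eta>)) \<and>
     (l > 0 \<longrightarrow>
      set_integrable lborel {0<..<\<eta>} (\<lambda>z. V2 l z \<xi> \<eta> * z powr (l - 1 / 2)) \<and>
      (LBINT z:{0<..<\<eta>}. V2 l z \<xi> \<eta> * z powr (l - 1 / 2))
        \<le> A2 * (\<xi> - \<eta>) powr l * (sqrt \<xi> - sqrt \<eta>)) \<and>
     (l < 0 \<longrightarrow>
      set_integrable lborel {0<..<\<eta>} (\<lambda>z. V2 l z \<xi> \<eta> * z powr (l - 1 / 2)) \<and>
      (LBINT z:{0<..<\<eta>}. V2 l z \<xi> \<eta> * z powr (l - 1 / 2))
        \<le> A2 * (\<xi> - \<eta>) powr (l + 1 / 2) * (1 - \<eta> / \<xi>) powr (l + 1 / 2))" for \<xi> \<eta> :: real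
  proof (intro impI conjI)
    assume e: "0 < \<eta> \<and> \<eta> < \<xi>"
    then have e': "0 < \<eta>" "\<eta> < \<xi>" by auto
    note M1 = V1_main[OF l K10 K1' e']
    show "set_integrable lborel {\<eta><..<\<xi>} (\<lambda>z. V1 l z \<xi> \<eta> * z powr (l - 1 / 2))" using M1 by blast
    show "(LBINT z:{\<eta><..<\<xi>}. V1 l z \<xi> \<eta> * z powr (l - 1 / 2))
        \<le> (4 * K1) * (\<xi> - \<eta>) powr l * (sqrt \<xi> - sqrt \<eta>)" using M1 by blast
    show "set_integrable lborel {0<..<\<eta>} (\<lambda>z. V2 l z \<xi> \<eta> * z powr (l - 1 / 2))"
      by (rule V2_pre(2)[OF l K20 K2' e'])
    show "set_integrable lborel {0<..<\<eta>} (\<lambda>z. V2 l z \<xi> \<eta> * z powr (l - 1 / 2))"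
      by (rule V2_pre(2)[OF l K20 K2' e'])
    show "(LBINT z:{0<..<\<eta>}. V2 l z \<xi> \<eta> * z powr (l - 1 / 2))
        \<le> A2 * (\<xi> - \<eta>) powr l * (sqrt \<xi> - sqrt \<eta>)" if lp: "l > 0"
      using V2_pos[OF lp K20 K2' e'] lp unfolding A2_def by simp
    show "(LBINT z:{0<..<\<eta>}. V2 l z \<xi> \<eta> * z powr (l - 1 / 2))
        \<le> A2 * (\<xi> - \<eta>) powr (l + 1 / 2) * (1 - \<eta> / \<xi>) powr (l + 1 / 2)" if ln: "l < 0"
      using V2_neg[OF l ln K20 K2' e'] ln unfolding A2_def by simp
  qed
  then show ?thesis by blast
qed

end
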